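(* Assume $0<\zeta_3<\zeta_2<\zeta_1$, let $b,c,\nu,k,\alpha,\phi,s_0$ be as in the context, $\xi=x+ct$, $\eta=s_0\xi-bt$, $\eta_0\in\mathbb{R}$, and $$u(x,t)=\frac{4\phi(\xi)\Theta^2(\nu\xi+\alpha)+e^{2(\eta+\eta_0)}\Theta^2(\nu\xi-\alpha)\bigl(2\phi(\xi)\phi'(\xi)-\phi''(\xi)-b\bigr)}{4\Theta^2(\nu\xi+\alpha)+e^{2(\eta+\eta_0)}\Theta^2(\nu\xi-\alpha)\bigl(c+2\phi'(\xi)-2\phi(\xi)^2\bigr)}.$$ Then $$u(x,t)\to\begin{cases}\phi(\xi) & \text{as }\eta\to-\infty,\\ -\phi(\xi-2\nu^{-1}\alpha) & \text{as }\eta\to+\infty.\end{cases}$$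
   Context: $b=4\zeta_1\zeta_2\zeta_3$, $c=2(\zeta_1^2+\zeta_2^2+\zeta_3^2)$, $\nu=\sqrt{\zeta_1^2-\zeta_3^2}$, modulus $k=\sqrt{(\zeta_1^2-\zeta_2^2)/(\zeta_1^2-\zeta_3^2)}$, $\alpha\in(0,K)$ with $\mathrm{sn}(\alpha)=\sqrt{(\zeta_1-\zeta_3)/(\zeta_1+\zeta_2)}$, $\phi(x)=\frac{2(\zeta_1+\zeta_3)(\zeta_2+\zeta_3)}{(\zeta_1+\zeta_3)-(\zeta_1-\zeta_2)\mathrm{sn}^2(\nu x)}-\zeta_1-\zeta_2-\zeta_3$, and $s_0=\nu H'(2\alpha)/H(2\alpha)$. Here $K=K(k)$, $K'=K(\sqrt{1-k^2})$, $q=e^{-\pi K'/K}$, $H(x)=\theta_1(\frac{\pi x}{2K})$, $\Theta(x)=\theta_4(\frac{\pi x}{2K})$ with $\theta_1(y)=2\sum_{n\ge1}(-1)^{n-1}q^{(n-1/2)^2}\sin((2n-1)y)$, $\theta_4(y)=1+2\sum_{n\ge1}(-1)^nq^{n^2}\cos(2ny)$. *)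

theory Defs
  imports "HOL-Analysis.Analysis"
begin

definition ellK :: "real \<Rightarrow> real" where
  "ellK k = integral {0..pi/2} (\<lambda>t. 1 / sqrt (1 - k\<^sup>2 * (sin t)\<^sup>2))"

definition ellF :: "real \<Rightarrow> real \<Rightarrow> real" where
  "ellF k p = (if 0 \<le> p then integral {0..p} (\<lambda>t. 1 / sqrt (1 - k\<^sup>2 * (sin t)\<^sup>2))
               else - integral {p..0} (\<lambda>t. 1 / sqrt (1 - k\<^sup>2 * (sin t)\<^sup>2)))"

definition jam :: "real \<Rightarrow> real \<Rightarrow> real" where
  "jam k u = (THE p. ellF k p = u)"

definition jsn :: "real \<Rightarrow> real \<Rightarrow> real" where
  "jsn k u = sin (jam k u)"

definition theta1 :: "real \<Rightarrow> real \<Rightarrow> real" where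
  "theta1 q y = 2 * (\<Sum>n. let m = Suc n in
       (-1) ^ (m - 1) * q powr ((real m - 1/2)\<^sup>2) * sin ((2 * real m - 1) * y))"

definition theta4 :: "real \<Rightarrow> real \<Rightarrow> real" where
  "theta4 q y = 1 + 2 * (\<Sum>n. let m = Suc n in
       (-1) ^ m * q ^ (m\<^sup>2) * cos (2 * real m * y))"

definition nome :: "real \<Rightarrow> real" where
  "nome k = exp (- pi * ellK (sqrt (1 - k\<^sup>2)) / ellK k)"

definition jacH :: "real \<Rightarrow> real \<Rightarrow> real" where
  "jacH k x = theta1 (nome k) (pi * x / (2 * ellK k))"

definition jacTheta :: "real \<Rightarrow> real \<Rightarrow> real" where
  "jacTheta k x = theta4 (nome k) (pi * x / (2 * ellK k))"

end

theory Submission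
  imports Defs "HOL-Analysis.Analysis"
begin


definition qp :: "real \<Rightarrow> nat \<Rightarrow> real" where "qp r n = (\<Prod>k=1..n. 1 - r^k)"

fun gb :: "real \<Rightarrow> nat \<Rightarrow> nat \<Rightarrow> real" where
  "gb Q 0 i = (if i = 0 then 1 else 0)"
| "gb Q (Suc N) 0 = 1"
| "gb Q (Suc N) (Suc i) = gb Q N (Suc i) + Q^(N-i) * gb Q N i"

lemma gb_zero: "N < i \<Longrightarrow> gb Q N i = 0"
proof (induction N arbitrary: i)
  case 0 then show ?case by simp
next
  case (Suc N) then show ?case by (cases i) auto
qed

lemma gb_0[simp]: "gb Q N 0 = 1" by (cases N) auto

lemma qp_Suc: "qp r (Suc n) = qp r n * (1 - r^Suc n)"
  unfolding qp_def by (simp add: prod.nat_ivl_Suc')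

lemma qp_0[simp]: "qp r 0 = 1" by (simp add: qp_def)

lemma qp_pos: "0 < r \<Longrightarrow> r < 1 \<Longrightarrow> qp r n > 0"
  unfolding qp_def by (intro prod_pos) (auto simp: power_less_one_iff)

lemma gb_formula: assumes "0 < Q" "Q < 1" shows "i \<le> N \<Longrightarrow> gb Q N i = qp Q N / (qp Q i * qp Q (N-i))"
proof (induction N arbitrary: i)
  case 0 then show ?case by (simp add: qp_def)
next
  case (Suc N)
  have pos: "\<And>n. qp Q n > 0" using qp_pos assms by auto
  show ?case
  proof (cases i)
    case 0 then show ?thesis using pos[of "Suc N"] by simp
  next
    case (Suc j)
    show ?thesis
    proof (cases "j = N")
      case True
      have "gb Q N N = 1" using Suc.IH[of N] pos[of N] by simp
      then show ?thesis using Suc True pos[of "Suc N"] by (simp add: gb_zero)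
    next
      case False
      then have jN: "j < N" using Suc Suc.prems by simp
      have e1: "gb Q N (Suc j) = qp Q N / (qp Q (Suc j) * qp Q (N - Suc j))" using Suc.IH jN by simp
      have e2: "gb Q N j = qp Q N / (qp Q j * qp Q (N - j))" using Suc.IH jN by simp
      obtain d where d: "N - j = Suc d" using jN by (metis Suc_diff_Suc)
      have d2: "N - Suc j = d" using d by simp
      have d3: "Suc N - Suc j = Suc d" using d by simp
      have Nd: "N = j + Suc d" using d jN by simp
      have "gb Q (Suc N) i = gb Q N (Suc j) + Q^(N-j) * gb Q N j" using Suc by simp
      also have "\<dots> = qp Q N / (qp Q j * (1 - Q^Suc j) * qp Q d) + Q^(Suc d) * (qp Q N / (qp Q j * (qp Q d * (1 - Q^Suc d))))"
        using e1 e2 d d2 by (simp add: qp_Suc)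
      also have "\<dots> = qp Q N * (1 - Q^Suc N) / (qp Q j * (1 - Q^Suc j) * (qp Q d * (1 - Q^Suc d)))"
      proof -
        have "Q^Suc j < 1" "Q^Suc d < 1" using assms by (intro power_Suc_less_one; simp)+
        then have "1 - Q^Suc j \<noteq> 0" "1 - Q^Suc d \<noteq> 0" by auto
        moreover have "qp Q j \<noteq> 0" "qp Q d \<noteq> 0" using pos by (metis less_irrefl)+
        moreover have "Q^Suc N = Q^Suc j * Q^Suc d"
          using Nd by (simp add: power_add[symmetric])
        ultimately show ?thesis using assms
          by (simp add: divide_simps) (simp add: algebra_simps)
      qed
      also have "\<dots> = qp Q (Suc N) / (qp Q i * qp Q (Suc N - i))"
        using Suc d3 by (simp add: qp_Suc mult.assoc)
      finally show ?thesis .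
    qed
  qed
qed

lemma qbh_exp: "j \<le> N \<Longrightarrow> Suc j * j + 2 * (N - j) = j * (j - 1) + 2 * N"
  by (cases j) (auto simp: algebra_simps)

lemma qbh:
  fixes x y :: complex
  shows "(\<Prod>k<N. x + of_real (q^(2*k)) * y) =
         (\<Sum>i\<le>N. of_real (q^(i*(i-1)) * gb (q^2) N i) * x^(N-i) * y^i)"
proof (induction N)
  case 0 then show ?case by simp
next
  case (Suc N)
  define c :: "nat \<Rightarrow> complex" where "c i = of_real (q^(i*(i-1)) * gb (q^2) N i)" for i
  have "(\<Prod>k<Suc N. x + of_real (q^(2*k)) * y) = (\<Sum>i\<le>N. c i * x^(N-i) * y^i) * (x + of_real (q^(2*N)) * y)"
    using Suc by (simp add: c_def)
  also have "\<dots> = (\<Sum>i\<le>N. c i * x^(Suc N-i) * y^i) + (\<Sum>i\<le>N. c i * of_real (q^(2*N)) * x^(N-i) * y^(Suc i))"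
    unfolding distrib_left sum_distrib_right
    by (intro arg_cong2[where f="(+)"] sum.cong) (auto simp: Suc_diff_le algebra_simps)
  also have "(\<Sum>i\<le>N. c i * x^(Suc N-i) * y^i) = x^(Suc N) + (\<Sum>j\<le>N. c (Suc j) * x^(N-j) * y^(Suc j))"
  proof -
    have "(\<Sum>i\<le>N. c i * x^(Suc N-i) * y^i) = (\<Sum>i\<le>Suc N. c i * x^(Suc N-i) * y^i)"
      by (simp add: c_def gb_zero)
    also have "\<dots> = (\<Sum>j\<le>N. c (Suc j) * x^(N-j) * y^(Suc j)) + c 0 * x^(Suc N)"
      by (subst sum.atMost_Suc_shift) simp
    finally show ?thesis by (simp add: c_def)
  qed
  also have "(\<Sum>i\<le>N. c i * of_real (q^(2*N)) * x^(N-i) * y^(Suc i)) =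
     (\<Sum>j\<le>N. of_real (q^(Suc j * j) * ((q^2)^(N-j) * gb (q^2) N j)) * x^(N-j) * y^(Suc j))"
  proof (rule sum.cong[OF refl])
    fix j assume "j \<in> {..N}"
    then have "Suc j * j + 2 * (N - j) = j * (j - 1) + 2 * N" using qbh_exp by auto
    then have eq: "q^(Suc j * j) * (q^2)^(N-j) = q^(j*(j-1)) * q^(2*N)"
      by (metis power_mult[symmetric] power_add[symmetric])
    define G where "G = gb (q^2) N j"
    have "q^(Suc j * j) * ((q^2)^(N-j) * G) = (q^(Suc j * j) * (q^2)^(N-j)) * G" by (rule mult.assoc[symmetric])
    also have "\<dots> = (q^(j*(j-1)) * q^(2*N)) * G" by (simp only: eq)
    also have "\<dots> = (q^(j*(j-1)) * G) * q^(2*N)" by (simp only: ac_simps)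
    finally have r: "of_real (q^(Suc j * j) * ((q^2)^(N-j) * gb (q^2) N j)) = c j * (of_real (q^(2*N)) :: complex)"
      unfolding c_def G_def by (simp only: of_real_mult)
    show "c j * of_real (q^(2*N)) * x^(N-j) * y^(Suc j) = of_real (q^(Suc j * j) * ((q^2)^(N-j) * gb (q^2) N j)) * x^(N-j) * y^(Suc j)"
      by (simp only: r)
  qed
  also have "x^(Suc N) + (\<Sum>j\<le>N. c (Suc j) * x^(N-j) * y^(Suc j)) +
     (\<Sum>j\<le>N. of_real (q^(Suc j * j) * ((q^2)^(N-j) * gb (q^2) N j)) * x^(N-j) * y^(Suc j))
     = (\<Sum>i\<le>Suc N. of_real (q^(i*(i-1)) * gb (q^2) (Suc N) i) * x^(Suc N-i) * y^i)"
    by (subst sum.atMost_Suc_shift) (simp add: c_def algebra_simps sum.distrib)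
  finally show ?case .
qed

lemma prod_split_double: "(\<Prod>k<n+n::nat. f k) = (\<Prod>k<n. f k) * (\<Prod>j<n. f (n+j))"
proof -
  have "(\<Prod>k<n+n. f k) = prod f {0..<n} * prod f {n..<n+n}"
    by (simp add: lessThan_atLeast0 prod.atLeastLessThan_concat)
  also have "prod f {n..<n+n} = (\<Prod>j<n. f (n+j))"
    using prod.shift_bounds_nat_ivl[of f 0 n n] by (simp add: lessThan_atLeast0 add.commute)
  finally show ?thesis by (simp add: lessThan_atLeast0)
qed

lemma sum_double_lt: "(\<Sum>k<n. 2*k) = n*(n-1::nat)"
  by (induction n) (auto simp: algebra_simps)

lemma fjtp_exp:
  fixes i n :: nat
  assumes "i \<le> 2*n" "1 \<le> n"
  shows "i*(i-1) + (2*n-1)*(2*n-i) = ((i-n)^2+(n-i)^2) + ((2*n-1)*n + n*(n-1))"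
proof (cases "i \<le> n")
  case True
  then obtain m where m: "n = i + m" using le_Suc_ex by blast
  show ?thesis using assms unfolding m by (cases i; cases m) (auto simp: algebra_simps power2_eq_square)
next
  case False
  then obtain m where m: "i = n + m" using le_Suc_ex[of n i] by auto
  obtain r where r: "n = m + r" using assms m le_Suc_ex[of m n] by auto
  show ?thesis
  proof (cases r)
    case 0
    then obtain t where t: "m = Suc t" using assms r by (cases m) auto
    show ?thesis unfolding m r 0 t by (simp add: algebra_simps power2_eq_square)
  next
    case (Suc s)
    show ?thesis unfolding m r Suc by (simp add: algebra_simps power2_eq_square)
  qed
qed

lemma fjtp:
  fixes z :: complex and q :: real
  assumes q: "q \<noteq> 0"
  shows "(\<Prod>j<n. (1 + of_real (q^(2*j+1)) * z) * (z + of_real (q^(2*j+1)))) =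
         (\<Sum>i\<le>2*n. of_real (gb (q^2) (2*n) i * q^((i-n)^2+(n-i)^2)) * z^i)"
proof (cases "n = 0")
  case True then show ?thesis by simp
next
  case False
  then have n1: "1 \<le> n" by simp
  define x :: complex where "x = of_real (q^(2*n-1))"
  define E where "E = (2*n-1)*n + n*(n-1)"
  have qb: "(\<Prod>k<n+n. x + of_real (q^(2*k)) * z) = (\<Sum>i\<le>2*n. of_real (q^(i*(i-1)) * gb (q^2) (2*n) i) * x^(2*n-i) * z^i)"
    using qbh[where x=x and q=q and N="2*n" and y=z] by (simp add: mult_2)
  have p2: "(\<Prod>j<n. x + of_real (q^(2*(n+j))) * z) = of_real (q^((2*n-1)*n)) * (\<Prod>j<n. 1 + of_real (q^(2*j+1)) * z)"
  proof -
    have "\<And>j. x + of_real (q^(2*(n+j))) * z = of_real (q^(2*n-1)) * (1 + of_real (q^(2*j+1)) * z)"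
    proof -
      fix j
      have "2*(n+j) = (2*n-1) + (2*j+1)" using n1 by simp
      then have "q^(2*(n+j)) = q^(2*n-1) * q^(2*j+1)" by (simp only: power_add)
      then show "x + of_real (q^(2*(n+j))) * z = of_real (q^(2*n-1)) * (1 + of_real (q^(2*j+1)) * z)"
        unfolding x_def by (simp add: algebra_simps)
    qed
    then have "(\<Prod>j<n. x + of_real (q^(2*(n+j))) * z) = (\<Prod>j<n. of_real (q^(2*n-1)) * (1 + of_real (q^(2*j+1)) * z))"
      by simp
    also have "\<dots> = of_real (q^(2*n-1))^n * (\<Prod>j<n. 1 + of_real (q^(2*j+1)) * z)"
      by (simp add: prod.distrib)
    finally show ?thesis by (simp add: power_mult)
  qed
  have p1: "(\<Prod>k<n. x + of_real (q^(2*k)) * z) = of_real (q^(n*(n-1))) * (\<Prod>j<n. z + of_real (q^(2*j+1)))"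
  proof -
    have "\<And>k. k < n \<Longrightarrow> x + of_real (q^(2*k)) * z = of_real (q^(2*k)) * (of_real (q^(2*(n - Suc k)+1)) + z)"
    proof -
      fix k assume k: "k < n"
      have "2*n-1 = 2*k + (2*(n - Suc k)+1)" using k by simp
      then have "q^(2*n-1) = q^(2*k) * q^(2*(n - Suc k)+1)" by (simp only: power_add)
      then show "x + of_real (q^(2*k)) * z = of_real (q^(2*k)) * (of_real (q^(2*(n - Suc k)+1)) + z)"
        unfolding x_def by (simp add: algebra_simps)
    qed
    then have "(\<Prod>k<n. x + of_real (q^(2*k)) * z) = (\<Prod>k<n. of_real (q^(2*k)) * (of_real (q^(2*(n - Suc k)+1)) + z))"
      by (intro prod.cong) auto
    also have "\<dots> = of_real (\<Prod>k<n. q^(2*k)) * (\<Prod>k<n. of_real (q^(2*(n - Suc k)+1)) + z)"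
      by (simp add: prod.distrib)
    also have "(\<Prod>k<n. of_real (q^(2*(n - Suc k)+1)) + z) = (\<Prod>j<n. z + of_real (q^(2*j+1)))"
      using prod.nat_diff_reindex[of "\<lambda>j. of_real (q^(2*j+1)) + z" n] by (simp add: add.commute)
    also have "(\<Prod>k<n. q^(2*k)) = q^(n*(n-1))"
      by (simp add: power_sum[symmetric] sum_double_lt)
    finally show ?thesis by simp
  qed
  have lhs: "(\<Prod>k<n+n. x + of_real (q^(2*k)) * z) = of_real (q^E) * (\<Prod>j<n. (1 + of_real (q^(2*j+1)) * z) * (z + of_real (q^(2*j+1))))"
  proof -
    have "(\<Prod>k<n+n. x + of_real (q^(2*k)) * z) = of_real (q^(n*(n-1))) * (\<Prod>j<n. z + of_real (q^(2*j+1))) *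
       (of_real (q^((2*n-1)*n)) * (\<Prod>j<n. 1 + of_real (q^(2*j+1)) * z))"
      unfolding prod_split_double p1 p2 ..
    also have "\<dots> = of_real (q^E) * ((\<Prod>j<n. 1 + of_real (q^(2*j+1)) * z) * (\<Prod>j<n. z + of_real (q^(2*j+1))))"
      unfolding E_def power_add of_real_mult by (simp only: ac_simps)
    also have "\<dots> = of_real (q^E) * (\<Prod>j<n. (1 + of_real (q^(2*j+1)) * z) * (z + of_real (q^(2*j+1))))"
      by (simp only: prod.distrib)
    finally show ?thesis .
  qed
  have rhs: "(\<Sum>i\<le>2*n. of_real (q^(i*(i-1)) * gb (q^2) (2*n) i) * x^(2*n-i) * z^i) =
             of_real (q^E) * (\<Sum>i\<le>2*n. of_real (gb (q^2) (2*n) i * q^((i-n)^2+(n-i)^2)) * z^i)"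
    unfolding sum_distrib_left
  proof (rule sum.cong[OF refl])
    fix i assume "i \<in> {..2*n}"
    then have "i*(i-1) + (2*n-1)*(2*n-i) = ((i-n)^2+(n-i)^2) + E" unfolding E_def using fjtp_exp n1 by auto
    then have eq: "q^(i*(i-1)) * (q^(2*n-1))^(2*n-i) = q^((i-n)^2+(n-i)^2) * q^E"
      by (metis power_add power_mult)
    define g where "g = gb (q^2) (2*n) i"
    define sq where "sq = (i-n)^2+(n-i)^2"
    have "q^(i*(i-1)) * g * (q^(2*n-1))^(2*n-i) = (q^(i*(i-1)) * (q^(2*n-1))^(2*n-i)) * g" by (simp only: ac_simps)
    also have "\<dots> = (q^sq * q^E) * g" unfolding sq_def by (simp only: eq)
    also have "\<dots> = q^E * (g * q^sq)" by (simp only: ac_simps)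
    finally have r: "q^(i*(i-1)) * g * (q^(2*n-1))^(2*n-i) = q^E * (g * q^sq)" .
    have "of_real (q^(i*(i-1)) * g) * x^(2*n-i) * z^i = of_real (q^(i*(i-1)) * g * (q^(2*n-1))^(2*n-i)) * z^i"
      unfolding x_def by simp
    also have "\<dots> = of_real (q^E) * (of_real (g * q^sq) * z^i)" unfolding r by simp
    finally show "of_real (q^(i*(i-1)) * gb (q^2) (2*n) i) * x^(2*n-i) * z^i = of_real (q^E) * (of_real (gb (q^2) (2*n) i * q^((i-n)^2+(n-i)^2)) * z^i)"
      unfolding g_def sq_def .
  qed
  have nz: "of_real (q^E) \<noteq> (0::complex)" using q by simp
  show ?thesis using qb unfolding lhs rhs using nz q by simp
qed


lemma one_minus_ge_exp:
  fixes x r :: real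
  assumes "0 \<le> x" "x \<le> r" "r < 1"
  shows "exp (- (x / (1 - r))) \<le> 1 - x"
proof -
  have x1: "x < 1" using assms by simp
  have "1 + x / (1 - x) \<le> exp (x / (1 - x))" by (rule exp_ge_add_one_self)
  then have "1 / (1 - x) \<le> exp (x / (1 - x))" using x1 by (simp add: field_simps)
  then have "exp (- (x / (1 - x))) \<le> 1 - x" using x1
    by (simp add: exp_minus field_simps)
  moreover have "x / (1 - x) \<le> x / (1 - r)" using assms
    by (intro divide_left_mono) auto
  ultimately show ?thesis by (smt (verit, best) exp_le_cancel_iff)
qed

lemma prod_lower:
  fixes x :: "nat \<Rightarrow> real"
  assumes "finite A" "\<And>j. j \<in> A \<Longrightarrow> 0 \<le> x j \<and> x j \<le> r" "r < 1" "sum x A \<le> S"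
  shows "exp (- (S / (1 - r))) \<le> (\<Prod>j\<in>A. 1 - x j)"
proof -
  have "exp (- (S / (1 - r))) \<le> exp (- (sum x A / (1 - r)))"
    using assms by (intro exp_mono le_imp_neg_le divide_right_mono) auto
  also have "\<dots> = (\<Prod>j\<in>A. exp (- (x j / (1 - r))))"
    using assms(1) by (simp add: exp_sum[symmetric] sum_divide_distrib sum_negf)
  also have "\<dots> \<le> (\<Prod>j\<in>A. 1 - x j)"
    using assms by (intro prod_mono) (auto intro: one_minus_ge_exp)
  finally show ?thesis .
qed

lemma sum_pow_le:
  fixes Q :: real
  assumes "finite A" "0 \<le> Q" "Q < 1"
  shows "(\<Sum>k\<in>A. Q^k) \<le> 1 / (1 - Q)"
proof -
  have "(\<Sum>k\<in>A. Q^k) \<le> (\<Sum>k. Q^k)"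
    using assms by (intro sum_le_suminf summable_geometric) auto
  also have "\<dots> = 1 / (1 - Q)" using assms by (intro suminf_geometric) auto
  finally show ?thesis .
qed

definition qL :: "real \<Rightarrow> real" where "qL Q = exp (- ((1 / (1 - Q)) / (1 - Q)))"

lemma qp_lower: assumes "0 \<le> Q" "Q < 1" shows "qL Q \<le> qp Q n"
  unfolding qL_def qp_def
proof (rule prod_lower)
  show "finite {1..n}" by simp
  show "Q < 1" by fact
  show "\<And>j. j \<in> {1..n} \<Longrightarrow> 0 \<le> Q^j \<and> Q^j \<le> Q"
    using assms by (auto intro: power_le_one simp: power_decreasing[of 1 _ Q, simplified])
  show "(\<Sum>k\<in>{1..n}. Q^k) \<le> 1 / (1 - Q)" using assms by (intro sum_pow_le) auto
qed

lemma qL_pos: "0 < qL Q" by (simp add: qL_def)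

lemma qp_decseq: assumes "0 \<le> Q" "Q < 1" shows "decseq (qp Q)"
proof (rule decseq_SucI)
  fix n
  have "0 \<le> qp Q n" using qp_lower[OF assms] qL_pos[of Q] by (meson less_le_trans less_imp_le)
  moreover have "0 \<le> Q^Suc n" using assms by simp
  ultimately show "qp Q (Suc n) \<le> qp Q n" by (simp add: qp_Suc mult_left_le)
qed

definition qP :: "real \<Rightarrow> real" where "qP Q = (INF n. qp Q n)"

lemma qp_lim: assumes "0 \<le> Q" "Q < 1" shows "qp Q \<longlonglongrightarrow> qP Q" "qL Q \<le> qP Q"
proof -
  have bdd: "bdd_below (range (qp Q))" using qp_lower[OF assms] by (intro bdd_belowI[of _ "qL Q"]) auto
  show "qp Q \<longlonglongrightarrow> qP Q" unfolding qP_def by (rule LIMSEQ_decseq_INF[OF bdd qp_decseq[OF assms]])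
  show "qL Q \<le> qP Q" unfolding qP_def using qp_lower[OF assms] by (intro cINF_greatest) auto
qed

lemma gb_nonneg: "0 \<le> Q \<Longrightarrow> 0 \<le> gb Q N i"
  by (induction Q N i rule: gb.induct) auto

lemma gb_bound: assumes "0 < Q" "Q < 1" shows "gb Q N i \<le> 1 / qL Q"
proof (cases "i \<le> N")
  case True
  have pos: "\<And>n. 0 < qp Q n" using qp_pos assms by auto
  have "qp Q N \<le> qp Q (N - i)" using qp_decseq assms by (auto simp: decseq_def)
  then have "qp Q N / (qp Q i * qp Q (N - i)) \<le> 1 / qp Q i"
    using pos[of i] pos[of "N-i"] pos[of N] by (simp add: field_simps)
  also have "\<dots> \<le> 1 / qL Q" using qp_lower[of Q i] assms qL_pos[of Q]
    by (intro divide_left_mono) auto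
  finally show ?thesis using gb_formula[OF assms True] by simp
next
  case False then show ?thesis using gb_zero[of N i Q] qL_pos[of Q] by simp
qed


lemma one_plus_cis2: "1 + cis (2*t) = 2 * complex_of_real (cos t) * cis t"
proof -
  have "cos (2 * t) = 2 * (cos t)^2 - 1" "sin (2 * t) = 2 * sin t * cos t" by (simp_all add: cos_double_cos sin_double)
  then show ?thesis by (simp add: complex_eq_iff power2_eq_square)
qed

lemma fjtp_real:
  fixes q y :: real
  assumes q: "q \<noteq> 0"
  shows "(\<Prod>j<n. 1 - 2*q^(2*j+1)*cos(2*y) + q^(4*j+2)) =
    (\<Sum>i\<le>2*n. gb (q^2) (2*n) i * q^((i-n)^2+(n-i)^2) * (-1)^(i+n) * cos(2*(real i - real n)*y))"
proof -
  define z :: complex where "z = - cis (2*y)"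
  define R where "R = (\<Prod>j<n. 1 - 2*q^(2*j+1)*cos(2*y) + q^(4*j+2))"
  have fac: "(1 + of_real a * z) * (z + of_real a) = z * of_real (1 - 2*a*cos(2*y) + a^2)" for a :: real
  proof -
    have "1 + z*z = - 2 * of_real (cos (2*y)) * z"
      using one_plus_cis2[of "2*y"] unfolding z_def by (simp add: cis_mult)
    then have h: "1 + z*z = - 2 * of_real (cos (2*y)) * z" .
    have "(1 + of_real a * z) * (z + of_real a) = z + of_real a ^ 2 * z + of_real a * (1 + z*z)"
      by (simp add: algebra_simps power2_eq_square)
    also have "\<dots> = z + of_real a ^ 2 * z + of_real a * (- 2 * of_real (cos (2*y)) * z)"
      unfolding h ..
    also have "\<dots> = z * of_real (1 - 2*a*cos(2*y) + a^2)" by (simp add: algebra_simps)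
    finally show ?thesis .
  qed
  have R2: "R = (\<Prod>j<n. 1 - 2*q^(2*j+1)*cos(2*y) + (q^(2*j+1))^2)"
  proof -
    have "\<And>j. (q^(2*j+1))^2 = q^(4*j+2)"
    proof -
      fix j :: nat
      have "4*j+2 = (2*j+1)*2" by simp
      then show "(q^(2*j+1))^2 = q^(4*j+2)" by (simp only: power_mult)
    qed
    then show ?thesis unfolding R_def by simp
  qed
  have "(\<Prod>j<n. (1 + of_real (q^(2*j+1)) * z) * (z + of_real (q^(2*j+1)))) =
        (\<Prod>j<n. z * of_real (1 - 2*q^(2*j+1)*cos(2*y) + (q^(2*j+1))^2))"
    by (simp only: fac)
  also have "\<dots> = z^n * of_real R" unfolding R2 by (simp add: prod.distrib)
  finally have "z^n * of_real R = (\<Prod>j<n. (1 + of_real (q^(2*j+1)) * z) * (z + of_real (q^(2*j+1))))" by simp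
  also have "\<dots> = (\<Sum>i\<le>2*n. of_real (gb (q^2) (2*n) i * q^((i-n)^2+(n-i)^2)) * z^i)"
    by (rule fjtp[OF q])
  finally have eq: "z^n * of_real R = (\<Sum>i\<le>2*n. of_real (gb (q^2) (2*n) i * q^((i-n)^2+(n-i)^2)) * z^i)" .
  define w :: complex where "w = (-1)^n * cis (-(real n * (2*y)))"
  have zpow: "z^i = (-1)^i * cis (real i * (2*y))" for i
    unfolding z_def power_minus[of "cis (2*y)"] Complex.DeMoivre ..
  have m1: "(-1)^n * (-1)^n = (1::complex)" by (simp flip: power_add)
  have zw: "z^n * w = 1" unfolding zpow w_def
    using m1 by (simp add: cis_mult algebra_simps)
  have ziw: "z^i * w = (-1)^(i+n) * cis (2*(real i - real n)*y)" for i
  proof -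
    have "z^i * w = ((-1)^i * (-1)^n) * (cis (real i * (2*y)) * cis (-(real n * (2*y))))"
      unfolding zpow w_def by (simp add: algebra_simps)
    also have "\<dots> = (-1)^(i+n) * cis (2*(real i - real n)*y)"
      by (simp add: cis_mult power_add algebra_simps)
    finally show ?thesis .
  qed
  have "of_real R = (\<Sum>i\<le>2*n. of_real (gb (q^2) (2*n) i * q^((i-n)^2+(n-i)^2)) * (z^i * w))"
  proof -
    have "of_real R = (z^n * of_real R) * w" using zw by (simp add: algebra_simps)
    also have "\<dots> = (\<Sum>i\<le>2*n. of_real (gb (q^2) (2*n) i * q^((i-n)^2+(n-i)^2)) * (z^i * w))"
      unfolding eq sum_distrib_right by (simp add: mult.assoc)
    finally show ?thesis .
  qed
  then have "R = Re (\<Sum>i\<le>2*n. of_real (gb (q^2) (2*n) i * q^((i-n)^2+(n-i)^2)) * (z^i * w))"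
    by (metis Re_complex_of_real)
  also have "\<dots> = (\<Sum>i\<le>2*n. gb (q^2) (2*n) i * q^((i-n)^2+(n-i)^2) * (-1)^(i+n) * cos(2*(real i - real n)*y))"
    unfolding Re_sum ziw by (intro sum.cong) (auto simp: Re_complex_of_real)
  finally show ?thesis unfolding R_def .
qed


lemma reindex_T:
  fixes q y :: real and n :: nat
  defines "b \<equiv> \<lambda>m::nat. (-1)^m * q^(m^2) * cos (2 * real m * y)"
  shows "(\<Sum>i\<le>2*n. gb Q (2*n) i * q^((i-n)^2+(n-i)^2) * (-1)^(i+n) * cos(2*(real i - real n)*y)) =
         (\<Sum>m\<le>n. (gb Q (2*n) (n+m) + (if m = 0 then 0 else gb Q (2*n) (n-m))) * b m)"
proof -
  define f where "f i = gb Q (2*n) i * q^((i-n)^2+(n-i)^2) * (-1)^(i+n) * cos(2*(real i - real n)*y)" for i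
  have split: "{..2*n} = {..<n} \<union> {n..n+n}" by auto
  have "(\<Sum>i\<le>2*n. f i) = (\<Sum>i<n. f i) + (\<Sum>i\<in>{n..n+n}. f i)"
    unfolding split by (rule sum.union_disjoint) auto
  also have "(\<Sum>i\<in>{n..n+n}. f i) = (\<Sum>m\<in>{0..n}. f (m + n))"
    using sum.shift_bounds_cl_nat_ivl[of f 0 n n] by simp
  also have "\<dots> = (\<Sum>m\<le>n. gb Q (2*n) (n+m) * b m)"
  proof (rule sum.cong)
    fix m assume "m \<in> {..n}"
    have "(-1::real)^(m+n+n) = (-1)^m" by (simp add: power_add flip: mult_2)
    then show "f (m + n) = gb Q (2*n) (n+m) * b m" unfolding f_def b_def by (simp add: add.commute mult_ac)
  qed auto
  also have "(\<Sum>i<n. f i) = (\<Sum>m<n. f (n - Suc m))" by (rule sum.nat_diff_reindex[symmetric])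
  also have "\<dots> = (\<Sum>m<n. gb Q (2*n) (n - Suc m) * b (Suc m))"
  proof (rule sum.cong[OF refl])
    fix m assume "m \<in> {..<n}"
    then have mn: "m < n" by simp
    have e1: "(n - Suc m - n)^2 + (n - (n - Suc m))^2 = (Suc m)^2" using mn by simp
    obtain k where k: "n = Suc m + k" using mn le_Suc_ex[of "Suc m" n] by auto
    have "n - Suc m + n = 2*k + Suc m" using k by simp
    then have e2: "(-1::real)^(n - Suc m + n) = (-1)^(Suc m)" by (simp only: power_add power_mult) simp
    have e3: "cos (2*(real (n - Suc m) - real n)*y) = cos (2 * real (Suc m) * y)"
    proof -
      have "2*(real (n - Suc m) - real n)*y = - (2 * real (Suc m) * y)" using mn by (simp add: of_nat_diff algebra_simps)
      then show ?thesis by simp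
    qed
    show "f (n - Suc m) = gb Q (2*n) (n - Suc m) * b (Suc m)"
      unfolding f_def b_def e1 e2 e3 by (simp add: mult_ac)
  qed
  also have "\<dots> = (\<Sum>m\<le>n. (if m = 0 then 0 else gb Q (2*n) (n-m)) * b m)"
    by (subst sum.atMost_shift) simp
  finally show ?thesis unfolding f_def by (simp add: sum.distrib algebra_simps)
qed

lemma R_lower:
  fixes q y :: real
  assumes q: "0 < q" "q < 1"
  shows "exp (- ((1 / (1 - q)) / (1 - q)))^2 \<le> (\<Prod>j<n. 1 - 2*q^(2*j+1)*cos(2*y) + q^(4*j+2))"
proof -
  have "exp (- ((1 / (1 - q)) / (1 - q))) \<le> (\<Prod>j<n. 1 - q^(2*j+1))"
  proof (rule prod_lower)
    show "\<And>j. j \<in> {..<n} \<Longrightarrow> 0 \<le> q^(2*j+1) \<and> q^(2*j+1) \<le> q"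
      using q by (auto intro: power_le_one simp: power_decreasing[of 1 _ q, simplified])
    have "(\<Sum>j<n. q^(2*j+1)) \<le> (\<Sum>j<n. q^j)"
      using q by (intro sum_mono power_decreasing) auto
    also have "\<dots> \<le> 1 / (1 - q)" using q by (intro sum_pow_le) auto
    finally show "(\<Sum>j<n. q^(2*j+1)) \<le> 1 / (1 - q)" .
  qed (use q in auto)
  then have "exp (- ((1 / (1 - q)) / (1 - q)))^2 \<le> (\<Prod>j<n. 1 - q^(2*j+1))^2"
    by (intro power_mono) auto
  also have "\<dots> = (\<Prod>j<n. (1 - q^(2*j+1))^2)" by (simp add: prod_power_distrib)
  also have "\<dots> \<le> (\<Prod>j<n. 1 - 2*q^(2*j+1)*cos(2*y) + q^(4*j+2))"
  proof (rule prod_mono)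
    fix j assume "j \<in> {..<n}"
    have e: "q^(4*j+2) = (q^(2*j+1))^2"
    proof -
      have "4*j+2 = (2*j+1)*2" by simp
      then show ?thesis by (simp only: power_mult)
    qed
    have "0 \<le> q^(2*j+1)" using q by simp
    moreover have "cos (2*y) \<le> 1" by simp
    ultimately have "2*q^(2*j+1)*cos(2*y) \<le> 2*q^(2*j+1)" by (simp add: mult_left_le)
    then have "(1 - q^(2*j+1))^2 \<le> 1 - 2*q^(2*j+1)*cos(2*y) + q^(4*j+2)"
      unfolding e by (simp add: power2_eq_square algebra_simps)
    then show "0 \<le> (1 - q^(2*j+1))^2 \<and> (1 - q^(2*j+1))^2 \<le> 1 - 2*q^(2*j+1)*cos(2*y) + q^(4*j+2)"
      by simp
  qed
  finally show ?thesis .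
qed

lemma theta4_pos:
  fixes q y :: real
  assumes q: "0 < q" "q < 1"
  shows "theta4 q y > 0"
proof -
  define Q where "Q = q^2"
  have Q: "0 < Q" "Q < 1" using q unfolding Q_def by (auto simp: power_less_one_iff)
  define P where "P = qP Q"
  have P: "qp Q \<longlonglongrightarrow> P" "0 < P" using qp_lim[of Q] Q qL_pos[of Q] unfolding P_def by auto
  define b where "b m = (-1)^m * q^(m^2) * cos (2 * real m * y)" for m :: nat
  define a where "a m n = (if m \<le> n then (gb Q (2*n) (n+m) + (if m = 0 then 0 else gb Q (2*n) (n-m))) * b m else 0)" for m n :: nat
  define c where "c m = (if m = 0 then 1 else 2) / P * b m" for m :: nat
  have bb: "\<bar>b m\<bar> \<le> q^(m^2)" for m
    unfolding b_def using q by (simp add: abs_mult mult_left_le)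
  have summ: "summable (\<lambda>m. 2 / qL Q * q^(m^2))"
  proof -
    have "summable (\<lambda>m. q^(m^2))"
    proof (rule summable_comparison_test')
      show "summable (\<lambda>m. q^m)" using q by (intro summable_geometric) auto
      show "norm (q^(m^2)) \<le> q^m" for m
        using q by (auto intro!: power_decreasing simp: power2_eq_square)
    qed
    then show ?thesis by (rule summable_mult)
  qed
  have lim: "(\<lambda>n. a m n) \<longlonglongrightarrow> c m" for m
  proof -
    have l1: "(\<lambda>n. qp Q (2*n)) \<longlonglongrightarrow> P"
      using LIMSEQ_subseq_LIMSEQ[OF P(1), of "\<lambda>n. 2*n"] by (simp add: strict_mono_def o_def)
    have l2: "(\<lambda>n. qp Q (n+m)) \<longlonglongrightarrow> P" by (rule LIMSEQ_ignore_initial_segment[OF P(1)])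
    have l3: "(\<lambda>n. qp Q (n-m)) \<longlonglongrightarrow> P"
      by (rule filterlim_compose[OF P(1) filterlim_minus_const_nat_at_top])
    define k :: real where "k = (if m = 0 then 1 else 2)"
    have t: "(\<lambda>n. k * (qp Q (2*n) / (qp Q (n+m) * qp Q (n-m))) * b m) \<longlonglongrightarrow> k * (P / (P * P)) * b m"
      using P(2) by (intro tendsto_mult tendsto_const tendsto_divide l1 l2 l3) auto
    have eqc: "k * (P / (P * P)) * b m = c m" using P(2) unfolding c_def k_def by simp
    have ev: "eventually (\<lambda>n. k * (qp Q (2*n) / (qp Q (n+m) * qp Q (n-m))) * b m = a m n) sequentially"
    proof (rule eventually_sequentiallyI[of m])
      fix n assume mn: "m \<le> n"
      have g1: "gb Q (2*n) (n+m) = qp Q (2*n) / (qp Q (n+m) * qp Q (n-m))"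
        using gb_formula[OF Q, of "n+m" "2*n"] mn by (simp add: mult_2)
      have g2: "gb Q (2*n) (n-m) = qp Q (2*n) / (qp Q (n+m) * qp Q (n-m))"
      proof -
        have "2*n - (n-m) = n+m" using mn by simp
        then show ?thesis using gb_formula[OF Q, of "n-m" "2*n"] mn by (simp add: mult.commute)
      qed
      show "k * (qp Q (2*n) / (qp Q (n+m) * qp Q (n-m))) * b m = a m n"
        unfolding a_def k_def using mn g1 g2 by simp
    qed
    have "(\<lambda>n. a m n) \<longlonglongrightarrow> k * (P / (P * P)) * b m" by (rule Lim_transform_eventually[OF t ev])
    then show ?thesis unfolding eqc .
  qed
  have bound: "norm (a m n) \<le> 2 / qL Q * q^(m^2)" for m n
  proof (cases "m \<le> n")
    case True
    have g: "0 \<le> gb Q N i" "gb Q N i \<le> 1 / qL Q" for N i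
      using gb_nonneg[of Q N i] gb_bound[OF Q, of N i] Q by auto
    have "\<bar>gb Q (2*n) (n+m) + (if m = 0 then 0 else gb Q (2*n) (n-m))\<bar> \<le> 2 / qL Q"
      using g[of "2*n" "n+m"] g[of "2*n" "n-m"] by auto
    moreover have "\<bar>b m\<bar> \<le> q^(m^2)" by (rule bb)
    ultimately have "\<bar>gb Q (2*n) (n+m) + (if m = 0 then 0 else gb Q (2*n) (n-m))\<bar> * \<bar>b m\<bar> \<le> 2 / qL Q * q^(m^2)"
      using qL_pos[of Q] by (intro mult_mono) auto
    then show ?thesis unfolding a_def using True by (simp add: abs_mult)
  next
    case False
    then show ?thesis unfolding a_def using qL_pos[of Q] q by simp
  qed
  have tan: "summable (\<lambda>n. norm (c n)) \<and> ((\<lambda>n. suminf (\<lambda>m. a m n)) \<longlonglongrightarrow> suminf c)"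
    using tannerys_theorem[where a=a and b=c and M="\<lambda>m. 2 / qL Q * q^(m^2)" and F=sequentially, OF lim _ summ]
  proof -
    have ev: "eventually (\<lambda>(k,n). norm (a k n) \<le> 2 / qL Q * q^(k^2)) (at_top \<times>\<^sub>F sequentially)"
      using bound by (intro always_eventually) auto
    show ?thesis using tannerys_theorem[where a=a and b=c and M="\<lambda>m. 2 / qL Q * q^(m^2)" and F=sequentially, OF lim ev summ]
      by simp
  qed
  have sumc: "summable c" using tan summable_norm_cancel by blast
  have Teq: "suminf (\<lambda>m. a m n) = (\<Prod>j<n. 1 - 2*q^(2*j+1)*cos(2*y) + q^(4*j+2))" for n
  proof -
    have "suminf (\<lambda>m. a m n) = (\<Sum>m\<le>n. a m n)" by (rule suminf_finite) (auto simp: a_def)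
    also have "\<dots> = (\<Sum>m\<le>n. (gb Q (2*n) (n+m) + (if m = 0 then 0 else gb Q (2*n) (n-m))) * b m)"
      by (intro sum.cong) (auto simp: a_def)
    also have "\<dots> = (\<Sum>i\<le>2*n. gb Q (2*n) i * q^((i-n)^2+(n-i)^2) * (-1)^(i+n) * cos(2*(real i - real n)*y))"
      unfolding b_def by (rule reindex_T[symmetric])
    also have "\<dots> = (\<Prod>j<n. 1 - 2*q^(2*j+1)*cos(2*y) + q^(4*j+2))"
      unfolding Q_def using q by (intro fjtp_real[symmetric]) auto
    finally show ?thesis .
  qed
  define K0 where "K0 = exp (- ((1 / (1 - q)) / (1 - q)))^2"
  have K0: "0 < K0" unfolding K0_def by simp
  have "K0 \<le> suminf c"
  proof (rule LIMSEQ_le_const)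
    show "(\<lambda>n. suminf (\<lambda>m. a m n)) \<longlonglongrightarrow> suminf c" using tan by blast
    show "\<exists>N. \<forall>n\<ge>N. K0 \<le> suminf (\<lambda>m. a m n)" unfolding Teq K0_def using R_lower[OF q] by blast
  qed
  moreover have "suminf c = theta4 q y / P"
  proof -
    have "suminf c = c 0 + (\<Sum>n. c (Suc n))" using suminf_split_head[OF sumc] by simp
    also have "(\<Sum>n. c (Suc n)) = (\<Sum>n. (2 / P) * b (Suc n))" unfolding c_def by simp
    also have "\<dots> = (2 / P) * (\<Sum>n. b (Suc n))"
    proof -
      have "summable (\<lambda>n. c (Suc n))" using sumc by (simp add: summable_Suc_iff)
      then have "summable (\<lambda>n. b (Suc n))" unfolding c_def using P(2) by (simp add: summable_cmult_iff)
      then show ?thesis by (rule suminf_mult)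
    qed
    also have "c 0 = 1 / P" unfolding c_def b_def by simp
    finally have "suminf c = (1 + 2 * (\<Sum>n. b (Suc n))) / P" by (simp add: add_divide_distrib)
    also have "(\<Sum>n. b (Suc n)) = (\<Sum>n. let m = Suc n in (-1)^m * q^(m^2) * cos (2 * real m * y))"
      unfolding b_def Let_def ..
    finally show ?thesis unfolding theta4_def .
  qed
  ultimately have "K0 \<le> theta4 q y / P" by simp
  then show ?thesis using K0 P(2) by (smt (verit) divide_le_0_iff)
qed


definition ef :: "real \<Rightarrow> real \<Rightarrow> real" where
  "ef k t = 1 / sqrt (1 - k\<^sup>2 * (sin t)\<^sup>2)"

lemma ellF_ef: "ellF k p = (if 0 \<le> p then integral {0..p} (ef k) else - integral {p..0} (ef k))"
  unfolding ellF_def ef_def ..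

lemma ellK_ef: "ellK k = ellF k (pi/2)"
  unfolding ellK_def ellF_def by simp

context
  fixes k :: real
  assumes k0: "0 \<le> k" and k1: "k < 1"
begin

lemma ksin_lt: "k\<^sup>2 * (sin t)\<^sup>2 < 1"
proof -
  have "(sin t)\<^sup>2 \<le> 1" by (simp add: abs_square_le_1 abs_sin_le_one)
  moreover have "k\<^sup>2 < 1" using k0 k1 by (simp add: power_less_one_iff)
  moreover have "0 \<le> k\<^sup>2" by simp
  ultimately have "k\<^sup>2 * (sin t)\<^sup>2 \<le> k\<^sup>2" by (simp add: mult_left_le)
  then show ?thesis using \<open>k\<^sup>2 < 1\<close> by simp
qed

lemma dpos: "0 < 1 - k\<^sup>2 * (sin t)\<^sup>2" using ksin_lt[of t] by simp

lemma ef_pos: "0 < ef k t" unfolding ef_def using dpos by simp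

lemma ef_ge1: "1 \<le> ef k t"
proof -
  have "1 - k\<^sup>2 * (sin t)\<^sup>2 \<le> 1" by simp
  then have "sqrt (1 - k\<^sup>2 * (sin t)\<^sup>2) \<le> 1" by simp
  then show ?thesis unfolding ef_def using dpos[of t] by (simp add: field_simps)
qed

lemma ef_cont: "continuous_on S (ef k)"
proof -
  have "sqrt (1 - k\<^sup>2 * (sin t)\<^sup>2) \<noteq> 0" for t using dpos[of t] by simp
  then show ?thesis unfolding ef_def by (intro continuous_intros) auto
qed

lemma ef_even: "ef k (-t) = ef k t" unfolding ef_def by simp

lemma ellF_deriv: "(ellF k has_real_derivative ef k p) (at p)"
proof -
  define a where "a = - \<bar>p\<bar> - 1"
  define b where "b = \<bar>p\<bar> + 1"
  define G where "G x = integral {a..x} (ef k)" for x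
  have ap: "a < p" "p < b" "a < 0" unfolding a_def b_def by auto
  have int: "ef k integrable_on {c..d}" for c d by (rule integrable_continuous_interval[OF ef_cont])
  have "(G has_real_derivative ef k p) (at p within {a..b})"
    unfolding G_def by (rule integral_has_real_derivative[OF ef_cont]) (use ap in auto)
  then have dG: "(G has_real_derivative ef k p) (at p)" using at_within_Icc_at[OF ap(1) ap(2)] by simp
  have dG2: "((\<lambda>x. G x - G 0) has_real_derivative ef k p) (at p)"
    using DERIV_diff[OF dG DERIV_const[of "G 0"]] by simp
  have eq: "G x - G 0 = ellF k x" if "x \<in> {a<..}" for x
  proof (cases "0 \<le> x")
    case True
    have "integral {a..0} (ef k) + integral {0..x} (ef k) = integral {a..x} (ef k)"
      by (rule Henstock_Kurzweil_Integration.integral_combine) (use ap True int in auto)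
    then show ?thesis unfolding G_def ellF_ef using True by simp
  next
    case False
    have "integral {a..x} (ef k) + integral {x..0} (ef k) = integral {a..0} (ef k)"
      by (rule Henstock_Kurzweil_Integration.integral_combine) (use that False int in auto)
    then show ?thesis unfolding G_def ellF_ef using False by simp
  qed
  show ?thesis
    by (rule has_field_derivative_transform_within_open[OF dG2, of "{a<..}"]) (use ap eq in auto)
qed

lemma ellF_isCont: "isCont (ellF k) p" using ellF_deriv by (rule DERIV_isCont)

lemma ellF_0: "ellF k 0 = 0" unfolding ellF_ef by simp

lemma ellF_strict: "x < y \<Longrightarrow> ellF k x < ellF k y"
  by (rule DERIV_pos_imp_increasing[of x y "ellF k"]) (use ellF_deriv ef_pos in blast)+

lemma ellF_mono_iff: "ellF k x \<le> ellF k y \<longleftrightarrow> x \<le> y"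
proof
  assume "ellF k x \<le> ellF k y"
  then show "x \<le> y" using ellF_strict[of y x] by (meson linorder_not_le)
next
  assume "x \<le> y"
  then show "ellF k x \<le> ellF k y" using ellF_strict[of x y] by (cases "x = y") auto
qed

lemma ellF_inj: "ellF k x = ellF k y \<longleftrightarrow> x = y"
  using ellF_mono_iff by (metis order_antisym order_refl)

lemma ellF_ge: "0 \<le> p \<Longrightarrow> p \<le> ellF k p"
proof -
  assume p: "0 \<le> p"
  have "(\<lambda>x. ellF k x - x) 0 \<le> (\<lambda>x. ellF k x - x) p"
  proof (rule DERIV_nonneg_imp_nondecreasing[OF p])
    fix x show "\<exists>y. ((\<lambda>x. ellF k x - x) has_real_derivative y) (at x) \<and> 0 \<le> y"
      using DERIV_diff[OF ellF_deriv DERIV_ident] ef_ge1 by force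
  qed
  then show ?thesis using ellF_0 by simp
qed

lemma ellF_le: "p \<le> 0 \<Longrightarrow> ellF k p \<le> p"
proof -
  assume p: "p \<le> 0"
  have "(\<lambda>x. ellF k x - x) p \<le> (\<lambda>x. ellF k x - x) 0"
  proof (rule DERIV_nonneg_imp_nondecreasing[OF p])
    fix x show "\<exists>y. ((\<lambda>x. ellF k x - x) has_real_derivative y) (at x) \<and> 0 \<le> y"
      using DERIV_diff[OF ellF_deriv DERIV_ident] ef_ge1 by force
  qed
  then show ?thesis using ellF_0 by simp
qed

lemma ellF_surj: "\<exists>p. ellF k p = u"
proof -
  have "ellF k (-\<bar>u\<bar>) \<le> u" using ellF_le[of "-\<bar>u\<bar>"] by simp
  moreover have "u \<le> ellF k \<bar>u\<bar>" using ellF_ge[of "\<bar>u\<bar>"] by simp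
  ultimately show ?thesis using IVT[of "ellF k" "-\<bar>u\<bar>" u "\<bar>u\<bar>"] ellF_isCont by auto
qed

lemma ellF_jam: "ellF k (jam k u) = u"
proof -
  obtain p where p: "ellF k p = u" using ellF_surj by blast
  have "ellF k (THE p. ellF k p = u) = u"
    by (rule theI[of _ p]) (use p ellF_inj in auto)
  then show ?thesis unfolding jam_def .
qed

lemma jam_ellF: "jam k (ellF k p) = p"
  using ellF_jam[of "ellF k p"] ellF_inj by blast

lemma jam_isCont: "isCont (jam k) u"
proof -
  have "isCont (jam k) (ellF k (jam k u))"
    by (rule isCont_inverse_function[where d=1]) (auto simp: jam_ellF ellF_isCont)
  then show ?thesis by (simp add: ellF_jam)
qed

lemma jam_deriv: "(jam k has_real_derivative sqrt (1 - k\<^sup>2 * (sin (jam k u))\<^sup>2)) (at u)"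
proof -
  have "(jam k has_real_derivative inverse (ef k (jam k u))) (at u)"
    by (rule DERIV_inverse_function[where f="ellF k" and a="u-1" and b="u+1"])
       (auto simp: ellF_deriv ellF_jam jam_isCont less_imp_neq[OF ef_pos, symmetric])
  then show ?thesis unfolding ef_def by simp
qed

lemma jam_0: "jam k 0 = 0" using jam_ellF[of 0] ellF_0 by simp

lemma ellF_odd: "ellF k (-p) = - ellF k p"
proof -
  have d: "((\<lambda>x. ellF k x + ellF k (-x)) has_real_derivative 0) (at x)" for x
  proof -
    have "((\<lambda>x. ellF k x + ellF k (-x)) has_real_derivative ef k x + ef k (-x) * (-1)) (at x)"
      by (intro DERIV_add DERIV_chain2[OF ellF_deriv] DERIV_minus DERIV_ident ellF_deriv)
    then show ?thesis using ef_even by simp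
  qed
  have "ellF k p + ellF k (-p) = ellF k 0 + ellF k (-0)"
    using DERIV_isconst_all[of "\<lambda>x. ellF k x + ellF k (-x)"] d by blast
  then show ?thesis using ellF_0 by simp
qed

lemma jam_odd: "jam k (-u) = - jam k u"
proof -
  have "ellF k (- jam k u) = -u" using ellF_odd ellF_jam by simp
  then show ?thesis using jam_ellF by metis
qed

lemma jam_mono_iff: "jam k x \<le> jam k y \<longleftrightarrow> x \<le> y"
  by (metis ellF_jam ellF_mono_iff)

lemma jam_K: "jam k (ellK k) = pi/2"
  unfolding ellK_ef by (rule jam_ellF)

end


definition cn :: "real \<Rightarrow> real \<Rightarrow> real" where "cn k u = cos (jam k u)"
definition dn :: "real \<Rightarrow> real \<Rightarrow> real" where "dn k u = sqrt (1 - k\<^sup>2 * (jsn k u)\<^sup>2)"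

lemma add_alg:
  fixes s1 c1 d1 s2 c2 d2 K :: real
  assumes "c1^2 = 1 - s1^2" "d1^2 = 1 - K * s1^2" "c2^2 = 1 - s2^2" "d2^2 = 1 - K * s2^2"
  shows "((c1*d1)*(c2*d2) + s1*(s2*d2)*d2 + s1*c2*(K* s2*c2) - (c2*d2)*(c1*d1) + s2*(-s1*d1)*d1 + s2*c1*(-K* s1*c1))
          * (1 - K* s1^2* s2^2)
       = (s1*c2*d2 + s2*c1*d1) * (-K*(2* s1*(c1*d1)* s2^2 + s1^2*(2* s2*(-(c2*d2)))))"
  using assms by algebra

context
  fixes k :: real
  assumes k0: "0 \<le> k" and k1: "k < 1"
begin

lemma dn_pos: "0 < dn k u"
  unfolding dn_def jsn_def using dpos[OF k0 k1] by simp

lemma dn_sq: "(dn k u)^2 = 1 - k\<^sup>2 * (jsn k u)\<^sup>2"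
  unfolding dn_def using dpos[OF k0 k1, of "jam k u"] by (simp add: jsn_def)

lemma cn_sq: "(cn k u)^2 = 1 - (jsn k u)\<^sup>2"
  unfolding cn_def jsn_def by (simp add: cos_squared_eq)

lemma sn_deriv: "(jsn k has_real_derivative cn k u * dn k u) (at u)"
proof -
  have "((\<lambda>u. sin (jam k u)) has_real_derivative cos (jam k u) * sqrt (1 - k\<^sup>2 * (sin (jam k u))\<^sup>2)) (at u)"
    by (rule DERIV_chain2[OF DERIV_sin jam_deriv[OF k0 k1]])
  then show ?thesis unfolding cn_def dn_def jsn_def[abs_def] by simp
qed

lemma cn_deriv: "(cn k has_real_derivative - jsn k u * dn k u) (at u)"
proof -
  have "((\<lambda>u. cos (jam k u)) has_real_derivative - sin (jam k u) * sqrt (1 - k\<^sup>2 * (sin (jam k u))\<^sup>2)) (at u)"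
    by (rule DERIV_chain2[OF DERIV_cos jam_deriv[OF k0 k1]])
  then show ?thesis unfolding cn_def[abs_def] dn_def jsn_def by simp
qed

lemma dn_deriv: "(dn k has_real_derivative - k\<^sup>2 * jsn k u * cn k u) (at u)"
proof -
  have h: "((\<lambda>u. 1 - k\<^sup>2 * (jsn k u)\<^sup>2) has_real_derivative - (k\<^sup>2 * (2 * jsn k u * (cn k u * dn k u)))) (at u)"
    by (rule derivative_eq_intros sn_deriv refl | simp add: power2_eq_square algebra_simps)+
  have "((\<lambda>u. sqrt (1 - k\<^sup>2 * (jsn k u)\<^sup>2)) has_real_derivative
        inverse (sqrt (1 - k\<^sup>2 * (jsn k u)\<^sup>2)) / 2 * - (k\<^sup>2 * (2 * jsn k u * (cn k u * dn k u)))) (at u)"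
    by (rule DERIV_chain2[OF DERIV_real_sqrt h]) (use dn_pos in \<open>simp add: dn_def\<close>)
  then show ?thesis using dn_pos[of u] unfolding dn_def[symmetric] by (simp add: dn_def[abs_def] field_simps)
qed

lemma sn_chain[derivative_intros]: "(f has_real_derivative f') (at x) \<Longrightarrow> ((\<lambda>x. jsn k (f x)) has_real_derivative cn k (f x) * dn k (f x) * f') (at x)"
  by (rule DERIV_chain2[OF sn_deriv])
lemma cn_chain[derivative_intros]: "(f has_real_derivative f') (at x) \<Longrightarrow> ((\<lambda>x. cn k (f x)) has_real_derivative - jsn k (f x) * dn k (f x) * f') (at x)"
  by (rule DERIV_chain2[OF cn_deriv])
lemma dn_chain[derivative_intros]: "(f has_real_derivative f') (at x) \<Longrightarrow> ((\<lambda>x. dn k (f x)) has_real_derivative - k\<^sup>2 * jsn k (f x) * cn k (f x) * f') (at x)"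
  by (rule DERIV_chain2[OF dn_deriv])

lemma sn0: "jsn k 0 = 0" unfolding jsn_def using jam_0[OF k0 k1] by simp
lemma cn0: "cn k 0 = 1" unfolding cn_def using jam_0[OF k0 k1] by simp
lemma dn0: "dn k 0 = 1" unfolding dn_def using sn0 by simp

lemma den_pos: "0 < 1 - k\<^sup>2 * (jsn k u)\<^sup>2 * (jsn k v)\<^sup>2"
proof -
  have "(jsn k v)\<^sup>2 \<le> 1" unfolding jsn_def by (simp add: abs_square_le_1 abs_sin_le_one)
  then have "k\<^sup>2 * (jsn k u)\<^sup>2 * (jsn k v)\<^sup>2 \<le> k\<^sup>2 * (jsn k u)\<^sup>2" by (simp add: mult_left_le)
  also have "\<dots> < 1" using ksin_lt[OF k0 k1, of "jam k u"] by (simp add: jsn_def)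
  finally show ?thesis by simp
qed

lemma sn_add: "jsn k (u + v) = (jsn k u * cn k v * dn k v + jsn k v * cn k u * dn k u) / (1 - k\<^sup>2 * (jsn k u)\<^sup>2 * (jsn k v)\<^sup>2)"
proof -
  define s where "s = u + v"
  define g where "g t = (jsn k t * cn k (s-t) * dn k (s-t) + jsn k (s-t) * cn k t * dn k t) / (1 - k\<^sup>2 * (jsn k t)\<^sup>2 * (jsn k (s-t))\<^sup>2)" for t
  have d: "(g has_real_derivative 0) (at t)" for t
  proof -
    define s1 where "s1 = jsn k t"
    define c1 where "c1 = cn k t"
    define d1 where "d1 = dn k t"
    define s2 where "s2 = jsn k (s-t)"
    define c2 where "c2 = cn k (s-t)"
    define d2 where "d2 = dn k (s-t)"
    have den: "1 - k\<^sup>2 * s1\<^sup>2 * s2\<^sup>2 \<noteq> 0" using den_pos[of t "s-t"] unfolding s1_def s2_def by simp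
    have alg: "((c1*d1)*(c2*d2) + s1*(s2*d2)*d2 + s1*c2*(k\<^sup>2* s2*c2) - (c2*d2)*(c1*d1) + s2*(-s1*d1)*d1 + s2*c1*(-k\<^sup>2* s1*c1))
          * (1 - k\<^sup>2* s1^2* s2^2)
       = (s1*c2*d2 + s2*c1*d1) * (-k\<^sup>2*(2* s1*(c1*d1)* s2^2 + s1^2*(2* s2*(-(c2*d2)))))"
      by (rule add_alg) (simp_all add: s1_def c1_def d1_def s2_def c2_def d2_def cn_sq dn_sq)
    show ?thesis unfolding g_def
      apply (rule derivative_eq_intros refl | simp)+
      subgoal using den by (simp add: s1_def s2_def)
      unfolding s1_def[symmetric] c1_def[symmetric] d1_def[symmetric] s2_def[symmetric] c2_def[symmetric] d2_def[symmetric]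
      apply (rule divide_eq_0_iff[THEN iffD2], rule disjI1)
      apply (simp add: power2_eq_square)
      using alg[unfolded power2_eq_square] by algebra
  qed
  have "g u = g 0" using DERIV_isconst_all[of g] d by blast
  also have "g 0 = jsn k s" unfolding g_def by (simp add: sn0 cn0 dn0)
  finally show ?thesis unfolding g_def s_def by simp
qed

end


context
  fixes k :: real
  assumes k0: "0 \<le> k" and k1: "k < 1"
begin

lemma Xf_deriv: "((\<lambda>x. jsn k (\<nu> * x)) has_real_derivative \<nu> * (cn k (\<nu> * x) * dn k (\<nu> * x))) (at x)"
  using DERIV_chain2[OF sn_deriv[OF k0 k1] DERIV_cmult_Id[of \<nu> x UNIV]] by (simp add: mult_ac)

lemma Wf_deriv: "((\<lambda>x. \<nu> * (cn k (\<nu> * x) * dn k (\<nu> * x))) has_real_derivative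
     - jsn k (\<nu> * x) * (\<nu>^2 + \<nu>^2 * k^2 - 2 * \<nu>^2 * k^2 * (jsn k (\<nu> * x))^2)) (at x)"
proof -
  have dc: "((\<lambda>x. cn k (\<nu> * x)) has_real_derivative - jsn k (\<nu> * x) * dn k (\<nu> * x) * \<nu>) (at x)"
    using DERIV_chain2[OF cn_deriv[OF k0 k1] DERIV_cmult_Id[of \<nu> x UNIV]] by simp
  have dd: "((\<lambda>x. dn k (\<nu> * x)) has_real_derivative - k\<^sup>2 * jsn k (\<nu> * x) * cn k (\<nu> * x) * \<nu>) (at x)"
    using DERIV_chain2[OF dn_deriv[OF k0 k1] DERIV_cmult_Id[of \<nu> x UNIV]] by simp
  have "((\<lambda>x. \<nu> * (cn k (\<nu> * x) * dn k (\<nu> * x))) has_real_derivative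
     \<nu> * (cn k (\<nu> * x) * (- k\<^sup>2 * jsn k (\<nu> * x) * cn k (\<nu> * x) * \<nu>) + (- jsn k (\<nu> * x) * dn k (\<nu> * x) * \<nu>) * dn k (\<nu> * x))) (at x)"
    by (intro DERIV_cmult DERIV_mult' dc dd)
  moreover have "\<nu> * (cn k (\<nu> * x) * (- k\<^sup>2 * jsn k (\<nu> * x) * cn k (\<nu> * x) * \<nu>) + (- jsn k (\<nu> * x) * dn k (\<nu> * x) * \<nu>) * dn k (\<nu> * x))
      = - jsn k (\<nu> * x) * (\<nu>^2 * (dn k (\<nu> * x))^2 + \<nu>^2 * k^2 * (cn k (\<nu> * x))^2)"
    by (simp add: power2_eq_square algebra_simps)
  moreover have "\<nu>^2 * (dn k (\<nu> * x))^2 + \<nu>^2 * k^2 * (cn k (\<nu> * x))^2 = \<nu>^2 + \<nu>^2 * k^2 - 2 * \<nu>^2 * k^2 * (jsn k (\<nu> * x))^2"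
    unfolding dn_sq[OF k0 k1] cn_sq[OF k0 k1] by (simp add: algebra_simps)
  ultimately show ?thesis by simp
qed

end

lemma gen_phi_deriv:
  fixes X W :: "real \<Rightarrow> real"
  assumes dX: "\<And>x. (X has_real_derivative W x) (at x)" and D: "\<And>x. a - e * (X x)^2 \<noteq> 0"
  shows "((\<lambda>x. m / (a - e * (X x)^2) - S) has_real_derivative 2 * m * e * X x * W x / (a - e * (X x)^2)^2) (at x)"
proof -
  have d2: "((\<lambda>x. (X x)^2) has_real_derivative of_nat 2 * (W x * X x ^ (2 - Suc 0))) (at x)"
    by (rule DERIV_power[OF dX])
  have dD: "((\<lambda>x. a - e * (X x)^2) has_real_derivative 0 - e * (of_nat 2 * (W x * X x ^ (2 - Suc 0)))) (at x)"
    by (intro DERIV_diff DERIV_const DERIV_cmult d2)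
  have "((\<lambda>x. m / (a - e * (X x)^2) - S) has_real_derivative
      (0 * (a - e * (X x)^2) - m * (0 - e * (of_nat 2 * (W x * X x ^ (2 - Suc 0))))) / ((a - e * (X x)^2) * (a - e * (X x)^2)) - 0) (at x)"
    by (intro DERIV_diff DERIV_divide DERIV_const dD D)
  then show ?thesis by (rule DERIV_cong) (simp add: power2_eq_square)
qed

lemma phi1_alg:
  fixes m e X W V Dv :: real
  assumes "Dv \<noteq> 0"
  shows "((2 * m * e * X * V + 2 * m * e * W * W) * Dv^2 - 2 * m * e * X * W * (of_nat 2 * ((0 - e * (of_nat 2 * (W * X ^ (2 - Suc 0)))) * Dv ^ (2 - Suc 0))))
        / (Dv^2 * Dv^2) = 2 * m * e * ((W^2 + X * V) * Dv + 4 * e * X^2 * W^2) / Dv^3"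
  using assms by (simp add: field_simps power2_eq_square power3_eq_cube)

lemma gen_phi1_deriv:
  fixes X W V :: "real \<Rightarrow> real"
  assumes dX: "\<And>x. (X has_real_derivative W x) (at x)" and dW: "\<And>x. (W has_real_derivative V x) (at x)"
    and D: "\<And>x. a - e * (X x)^2 \<noteq> 0"
  shows "((\<lambda>x. 2 * m * e * X x * W x / (a - e * (X x)^2)^2) has_real_derivative
     2 * m * e * (((W x)^2 + X x * V x) * (a - e * (X x)^2) + 4 * e * (X x)^2 * (W x)^2) / (a - e * (X x)^2)^3) (at x)"
proof -
  have d2: "((\<lambda>x. (X x)^2) has_real_derivative of_nat 2 * (W x * X x ^ (2 - Suc 0))) (at x)"
    by (rule DERIV_power[OF dX])
  have dD: "((\<lambda>x. a - e * (X x)^2) has_real_derivative 0 - e * (of_nat 2 * (W x * X x ^ (2 - Suc 0)))) (at x)"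
    by (intro DERIV_diff DERIV_const DERIV_cmult d2)
  have dD2: "((\<lambda>x. (a - e * (X x)^2)^2) has_real_derivative of_nat 2 * ((0 - e * (of_nat 2 * (W x * X x ^ (2 - Suc 0)))) * (a - e * (X x)^2) ^ (2 - Suc 0))) (at x)"
    by (rule DERIV_power[OF dD])
  have dN: "((\<lambda>x. 2 * m * e * X x * W x) has_real_derivative (2 * m * e * X x * V x + 2 * m * e * W x * W x)) (at x)"
    using DERIV_mult'[OF DERIV_cmult[OF dX, of "2 * m * e"] dW] by simp
  have D2: "(a - e * (X x)^2)^2 \<noteq> 0" using D[of x] by simp
  have "((\<lambda>x. 2 * m * e * X x * W x / (a - e * (X x)^2)^2) has_real_derivative
      ((2 * m * e * X x * V x + 2 * m * e * W x * W x) * (a - e * (X x)^2)^2 - 2 * m * e * X x * W x * (of_nat 2 * ((0 - e * (of_nat 2 * (W x * X x ^ (2 - Suc 0)))) * (a - e * (X x)^2) ^ (2 - Suc 0))))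
        / ((a - e * (X x)^2)^2 * (a - e * (X x)^2)^2)) (at x)"
    by (rule DERIV_divide[OF dN dD2 D2])
  then show ?thesis
    by (rule DERIV_cong) (rule phi1_alg[OF D])
qed


lemma poly_p0:
  fixes p q r X :: real
  defines "a \<equiv> p + r" and "e \<equiv> p - q" and "m \<equiv> 2 * (p + r) * (q + r)" and "S \<equiv> p + q + r"
    and "b \<equiv> 4 * p * q * r" and "c \<equiv> 2 * (p^2 + q^2 + r^2)" and "ka \<equiv> p^2 - q^2" and "n2 \<equiv> p^2 - r^2"
  defines "R \<equiv> (1 - X^2) * (n2 - ka * X^2)" and "D \<equiv> a - e * X^2"
  defines "F \<equiv> m - S * D" and "V \<equiv> - X * (n2 + ka - 2 * ka * X^2)"
  defines "G \<equiv> (R + X * V) * D + 4 * e * X^2 * R"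
  defines "A1 \<equiv> 4 * m * e * X * F" and "A0 \<equiv> - 2 * m * e * G - b * D^3"
  defines "B1 \<equiv> 4 * m * e * X" and "B0 \<equiv> c * D^2 - 2 * F^2"
  defines "M2 \<equiv> p^2 - ka * X^2"
  defines "H0 \<equiv> a * M2^2 - e * (q^2 * r^2 * X^2 + p^2 * R)" and "H1 \<equiv> 2 * e * p * q * r * X"
  defines "J0 \<equiv> m * M2^2 - S * H0" and "J1 \<equiv> - S * H1"
  shows "A0 * H0 + A1 * H1 * R + D * (J0 * B0 + J1 * B1 * R) = 0"
    and "A0 * H1 + A1 * H0 + D * (J0 * B1 + J1 * B0) = 0"
  unfolding assms by algebra+

lemma frac_comb:
  fixes x u v D H :: real
  assumes "D \<noteq> 0" "H \<noteq> 0"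
  shows "x / D^3 + u / H * (v / D^2) = (x * H + D * (u * v)) / (D^3 * H)"
  using assms by (simp add: field_simps power2_eq_square power3_eq_cube)

lemma main_alg:
  fixes p q r X W :: real
  defines "a \<equiv> p + r" and "e \<equiv> p - q" and "m \<equiv> 2 * (p + r) * (q + r)" and "S \<equiv> p + q + r"
    and "b \<equiv> 4 * p * q * r" and "c \<equiv> 2 * (p^2 + q^2 + r^2)" and "ka \<equiv> p^2 - q^2" and "n2 \<equiv> p^2 - r^2"
  defines "R \<equiv> (1 - X^2) * (n2 - ka * X^2)" and "D \<equiv> a - e * X^2" and "M2 \<equiv> p^2 - ka * X^2"
  defines "V \<equiv> - X * (n2 + ka - 2 * ka * X^2)"
  assumes hW: "W^2 = R" and hD: "D \<noteq> 0" and hM: "M2 \<noteq> 0"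
    and hN: "a - e * ((q * r * X - p * W) / M2)^2 \<noteq> 0"
  shows "2 * (m / D - S) * (2 * m * e * X * W / D^2) - 2 * m * e * ((W^2 + X * V) * D + 4 * e * X^2 * W^2) / D^3 - b
        + (m / (a - e * ((q * r * X - p * W) / M2)^2) - S) * (c + 2 * (2 * m * e * X * W / D^2) - 2 * (m / D - S)^2) = 0"
proof -
  define F where "F = m - S * D"
  define G where "G = (R + X * V) * D + 4 * e * X^2 * R"
  define A1 where "A1 = 4 * m * e * X * F"
  define A0 where "A0 = - 2 * m * e * G - b * D^3"
  define B1 where "B1 = 4 * m * e * X"
  define B0 where "B0 = c * D^2 - 2 * F^2"
  define H0 where "H0 = a * M2^2 - e * (q^2 * r^2 * X^2 + p^2 * R)"
  define H1 where "H1 = 2 * e * p * q * r * X"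
  define J0 where "J0 = m * M2^2 - S * H0"
  define J1 where "J1 = - S * H1"
  have P0: "A0 * H0 + A1 * H1 * R + D * (J0 * B0 + J1 * B1 * R) = 0"
    and P1: "A0 * H1 + A1 * H0 + D * (J0 * B1 + J1 * B0) = 0"
    unfolding A0_def A1_def B0_def B1_def H0_def H1_def J0_def J1_def F_def G_def
    unfolding a_def e_def m_def S_def b_def c_def ka_def n2_def R_def D_def M2_def V_def
    by algebra+
  have phi: "m / D - S = F / D" unfolding F_def using hD by (simp add: field_simps)
  have hA: "2 * (m / D - S) * (2 * m * e * X * W / D^2) - 2 * m * e * ((W^2 + X * V) * D + 4 * e * X^2 * W^2) / D^3 - b
      = (A1 * W + A0) / D^3"
    unfolding phi A1_def A0_def G_def hW[symmetric] using hD by (simp add: field_simps power2_eq_square power3_eq_cube)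
  have hB: "c + 2 * (2 * m * e * X * W / D^2) - 2 * (m / D - S)^2 = (B1 * W + B0) / D^2"
    unfolding phi B1_def B0_def using hD by (simp add: field_simps power2_eq_square)
  have hH: "a * M2^2 - e * (q * r * X - p * W)^2 = H0 + H1 * W"
  proof -
    have sq: "(q * r * X - p * W)^2 = q^2 * r^2 * X^2 - 2 * p * q * r * X * W + p^2 * R"
      unfolding hW[symmetric] by (simp add: power2_eq_square algebra_simps)
    show ?thesis unfolding sq H0_def H1_def by (simp add: algebra_simps)
  qed
  have hN2: "a - e * ((q * r * X - p * W) / M2)^2 = (H0 + H1 * W) / M2^2"
    unfolding hH[symmetric] using hM by (simp add: field_simps power2_eq_square)
  have hHnz: "H0 + H1 * W \<noteq> 0" using hN unfolding hN2 by simp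
  have hpsi: "m / (a - e * ((q * r * X - p * W) / M2)^2) - S = (J0 + J1 * W) / (H0 + H1 * W)"
    unfolding hN2 J0_def J1_def using hM hHnz by (simp add: field_simps)
  have num: "(A1 * W + A0) * (H0 + H1 * W) + D * ((J0 + J1 * W) * (B1 * W + B0)) = 0"
  proof -
    have "(A1 * W + A0) * (H0 + H1 * W) + D * ((J0 + J1 * W) * (B1 * W + B0))
        = (A0 * H0 + A1 * H1 * R + D * (J0 * B0 + J1 * B1 * R)) + (A0 * H1 + A1 * H0 + D * (J0 * B1 + J1 * B0)) * W
          + (W^2 - R) * (A1 * H1 + D * J1 * B1)"
      by (simp add: algebra_simps power2_eq_square)
    then show ?thesis unfolding P0 P1 hW by simp
  qed
  show ?thesis unfolding hA hB hpsi
  proof -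
    have "(A1 * W + A0) / D^3 + (J0 + J1 * W) / (H0 + H1 * W) * ((B1 * W + B0) / D^2)
        = ((A1 * W + A0) * (H0 + H1 * W) + D * ((J0 + J1 * W) * (B1 * W + B0))) / (D^3 * (H0 + H1 * W))"
      by (rule frac_comb[OF hD hHnz])
    then show "(A1 * W + A0) / D^3 + (J0 + J1 * W) / (H0 + H1 * W) * ((B1 * W + B0) / D^2) = 0"
      unfolding num by simp
  qed
qed

lemma quartic_B:
  fixes p q r y y1 :: real
  assumes "0 < r" "r < q" "q < p" "q + r - p \<le> y" "y \<le> p + r - q"
    and hQ: "y1^2 = y^4 - 2 * (p^2 + q^2 + r^2) * y^2 + 2 * (4 * p * q * r) * y
                   + (q + r - p) * (p - q + r) * (p + q - r) * (- (p + q + r))"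
  shows "2 * (p^2 + q^2 + r^2) + 2 * y1 - 2 * y^2 > 0"
proof -
  define c where "c = 2 * (p^2 + q^2 + r^2)"
  have pos1: "0 < p * q + q * r - p * r"
  proof -
    have "0 < p * (q - r)" using assms by simp
    moreover have "0 < q * r" using assms by simp
    ultimately show ?thesis by (simp add: algebra_simps)
  qed
  have ya: "\<bar>y\<bar> \<le> p + r - q" using assms by auto
  have ysq: "y^2 \<le> (p + r - q)^2"
  proof -
    have "\<bar>y\<bar>^2 \<le> (p + r - q)^2" by (rule power_mono[OF ya abs_ge_zero])
    then show ?thesis by simp
  qed
  have e1: "c - 2 * (p + r - q)^2 = 4 * (p * q + q * r - p * r)" unfolding c_def by (simp add: power2_eq_square algebra_simps)
  have h1a: "c - 2 * (p + r - q)^2 \<le> c - 2 * y^2" using ysq by simp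
  have h1b: "0 < c - 2 * (p + r - q)^2" unfolding e1 using pos1 by simp
  have h1: "0 < c - 2 * y^2" using h1a h1b by linarith
  have L: "(c - 2 * y^2)^2 - 4 * y1^2 = c^2 - 8 * (4 * p * q * r) * y - 4 * ((q + r - p) * (p - q + r) * (p + q - r) * (- (p + q + r)))"
    unfolding hQ c_def by (simp add: power2_eq_square power4_eq_xxxx algebra_simps)
  have Lhi: "c^2 - 8 * (4 * p * q * r) * (p + r - q) - 4 * ((q + r - p) * (p - q + r) * (p + q - r) * (- (p + q + r)))
           = (4 * (p * q + q * r - p * r))^2"
    unfolding c_def by (simp add: power2_eq_square algebra_simps)
  have "8 * (4 * p * q * r) * y \<le> 8 * (4 * p * q * r) * (p + r - q)"
    using assms by (intro mult_left_mono) auto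
  moreover have "0 < (4 * (p * q + q * r - p * r))^2" using pos1 by simp
  moreover have "(2 * y1)^2 = 4 * y1^2" by (simp add: power2_eq_square)
  ultimately have h2: "(2 * y1)^2 < (c - 2 * y^2)^2"
    using L Lhi by linarith
  have "\<bar>2 * y1\<bar> < c - 2 * y^2"
  proof (rule power2_less_imp_less)
    show "\<bar>2 * y1\<bar>^2 < (c - 2 * y^2)^2" using h2 by simp
  qed (use h1 in auto)
  then show ?thesis unfolding c_def by linarith
qed

lemma phi_Q:
  fixes p q r X W :: real
  defines "a \<equiv> p + r" and "e \<equiv> p - q" and "m \<equiv> 2 * (p + r) * (q + r)" and "S \<equiv> p + q + r"
    and "ka \<equiv> p^2 - q^2" and "n2 \<equiv> p^2 - r^2"
  defines "R \<equiv> (1 - X^2) * (n2 - ka * X^2)" and "D \<equiv> a - e * X^2"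
  assumes hW: "W^2 = R" and hD: "D \<noteq> 0"
  shows "(2 * m * e * X * W / D^2)^2 = (m / D - S)^4 - 2 * (p^2 + q^2 + r^2) * (m / D - S)^2 + 2 * (4 * p * q * r) * (m / D - S)
                   + (q + r - p) * (p - q + r) * (p + q - r) * (- (p + q + r))"
proof -
  define F where "F = m - S * D"
  have phi: "m / D - S = F / D" unfolding F_def using hD by (simp add: field_simps)
  have lhs: "(2 * m * e * X * W / D^2)^2 = (4 * m^2 * e^2 * X^2 * R) / D^4"
    unfolding hW[symmetric] by (simp add: power2_eq_square power4_eq_xxxx field_simps)
  have rhs: "(F / D)^4 - 2 * (p^2 + q^2 + r^2) * (F / D)^2 + 2 * (4 * p * q * r) * (F / D)
                   + (q + r - p) * (p - q + r) * (p + q - r) * (- (p + q + r))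
       = (F^4 - 2 * (p^2 + q^2 + r^2) * F^2 * D^2 + 2 * (4 * p * q * r) * F * D^3
                   + (q + r - p) * (p - q + r) * (p + q - r) * (- (p + q + r)) * D^4) / D^4"
    using hD by (simp add: field_simps power2_eq_square power3_eq_cube power4_eq_xxxx)
  have poly: "4 * m^2 * e^2 * X^2 * R = F^4 - 2 * (p^2 + q^2 + r^2) * F^2 * D^2 + 2 * (4 * p * q * r) * F * D^3
                   + (q + r - p) * (p - q + r) * (p + q - r) * (- (p + q + r)) * D^4"
    unfolding F_def D_def R_def a_def e_def m_def S_def ka_def n2_def by algebra
  show ?thesis unfolding phi lhs rhs poly ..
qed


context
  fixes p q r :: real
  assumes z: "0 < r" "r < q" "q < p"
begin

lemma nzs: "p \<noteq> 0" "p + q \<noteq> 0" "p + r \<noteq> 0" "p - r \<noteq> 0" "p - q \<noteq> 0" "q + r \<noteq> 0"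
  using z by auto

lemma invs: "p * inverse p = 1" "(p + q) * inverse (p + q) = 1" "(p + r) * inverse (p + r) = 1"
  "(p - r) * inverse (p - r) = 1" "(p - q) * inverse (p - q) = 1" "(q + r) * inverse (q + r) = 1"
  using nzs by (simp_all add: right_inverse)

lemma two_inv: "(2::real) * inverse 2 = 1" by simp

lemma sqd: "p^2 - r^2 = (p - r) * (p + r)" "p^2 - q^2 = (p - q) * (p + q)"
  by (simp_all add: power2_eq_square algebra_simps)

lemma L1: "1 - (p - r) / (p + q) = (q + r) / (p + q)"
  using nzs by (simp add: field_simps)

lemma L2: "1 - (p^2 - q^2) / (p^2 - r^2) * ((p - r) / (p + q)) = (q + r) / (p + r)"
  unfolding sqd unfolding divide_inverse inverse_mult_distrib power2_eq_square using invs by algebra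

lemma L4: "1 - (p^2 - q^2) / (p^2 - r^2) * ((p - r) / (p + q))^2 = 2 * p * (q + r) / ((p + r) * (p + q))"
  unfolding sqd unfolding divide_inverse inverse_mult_distrib power2_eq_square using invs by algebra

lemma L3: "((p - r) / (p + q)) * ((q + r) / (p + q)) * ((q + r) / (p + r)) = (p^2 - r^2) * (q + r)^2 / ((p + q) * (p + r))^2"
  unfolding sqd unfolding divide_inverse inverse_mult_distrib power2_eq_square using invs by algebra

lemma L5: "2 * (n * (q + r) / ((p + q) * (p + r))) / (2 * p * (q + r) / ((p + r) * (p + q))) = n / p"
  unfolding divide_inverse inverse_mult_distrib inverse_inverse_eq using invs by algebra

lemma L6:
  assumes "s2 = (p - r) / (p + q)" "c2 = (q + r) / (p + q)" "d2 = (q + r) / (p + r)"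
    "K = (p^2 - q^2) / (p^2 - r^2)" "dd = 2 * p * (q + r) / ((p + r) * (p + q))"
    "T = (p^2 - r^2) * (q + r)^2 / ((p + q) * (p + r))^2"
  shows "((c2 * d2 - s2 * d2 - K * s2 * c2) * dd + 4 * K * s2 * T) / dd^2 = q * r / p^2"
proof -
  have ddnz: "dd \<noteq> 0" unfolding assms using nzs z by simp
  have "(c2 * d2 - s2 * d2 - K * s2 * c2) * dd + 4 * K * s2 * T = q * r / p^2 * dd^2"
    unfolding assms unfolding sqd unfolding divide_inverse inverse_mult_distrib power2_eq_square using invs by algebra
  then show ?thesis using ddnz by simp
qed

end


lemma lim_bot:
  fixes T1 T2 A B f \<eta>0 :: real
  assumes "T1 > 0"
  shows "((\<lambda>\<eta>. (4 * f * T1 + exp (2 * (\<eta> + \<eta>0)) * T2 * A) / (4 * T1 + exp (2 * (\<eta> + \<eta>0)) * T2 * B)) \<longlongrightarrow> f) at_bot"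
proof -
  have e: "((\<lambda>\<eta>::real. exp (2 * (\<eta> + \<eta>0))) \<longlongrightarrow> 0) at_bot"
  proof -
    have "((\<lambda>\<eta>::real. exp (2 * \<eta>0) * (exp \<eta>)^2) \<longlongrightarrow> exp (2 * \<eta>0) * 0^2) at_bot"
      by (intro tendsto_intros exp_at_bot)
    moreover have "exp (2 * \<eta>0) * (exp \<eta>)^2 = exp (2 * (\<eta> + \<eta>0))" for \<eta> :: real
      by (simp add: exp_add[symmetric] power2_eq_square algebra_simps)
    ultimately show ?thesis by simp
  qed
  have "((\<lambda>\<eta>. (4 * f * T1 + exp (2 * (\<eta> + \<eta>0)) * T2 * A) / (4 * T1 + exp (2 * (\<eta> + \<eta>0)) * T2 * B))
        \<longlongrightarrow> (4 * f * T1 + 0 * T2 * A) / (4 * T1 + 0 * T2 * B)) at_bot"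
    using assms by (intro tendsto_intros e) auto
  then show ?thesis using assms by simp
qed

lemma lim_top:
  fixes T1 T2 A B f \<eta>0 :: real
  assumes "T2 > 0" "B \<noteq> 0"
  shows "((\<lambda>\<eta>. (4 * f * T1 + exp (2 * (\<eta> + \<eta>0)) * T2 * A) / (4 * T1 + exp (2 * (\<eta> + \<eta>0)) * T2 * B)) \<longlongrightarrow> A / B) at_top"
proof -
  have e: "((\<lambda>\<eta>::real. exp (- (2 * (\<eta> + \<eta>0)))) \<longlongrightarrow> 0) at_top"
  proof -
    have e1: "((\<lambda>\<eta>::real. exp (- \<eta>)) \<longlongrightarrow> 0) at_top"
      by (rule filterlim_compose[OF exp_at_bot filterlim_uminus_at_bot_at_top])
    have "((\<lambda>\<eta>::real. exp (- (2 * \<eta>0)) * (exp (- \<eta>))^2) \<longlongrightarrow> exp (- (2 * \<eta>0)) * 0^2) at_top"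
      by (intro tendsto_intros e1)
    moreover have "exp (- (2 * \<eta>0)) * (exp (- \<eta>))^2 = exp (- (2 * (\<eta> + \<eta>0)))" for \<eta> :: real
      by (simp add: exp_add[symmetric] power2_eq_square algebra_simps)
    ultimately show ?thesis by simp
  qed
  have eq: "(4 * f * T1 + exp (2 * (\<eta> + \<eta>0)) * T2 * A) / (4 * T1 + exp (2 * (\<eta> + \<eta>0)) * T2 * B)
      = (4 * f * T1 * exp (- (2 * (\<eta> + \<eta>0))) + T2 * A) / (4 * T1 * exp (- (2 * (\<eta> + \<eta>0))) + T2 * B)" for \<eta>
  proof -
    define E where "E = exp (2 * (\<eta> + \<eta>0))"
    have E: "E > 0" "exp (- (2 * (\<eta> + \<eta>0))) = 1 / E" unfolding E_def
      by (simp, subst exp_minus, simp add: inverse_eq_divide)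
    have "(4 * f * T1 + E * T2 * A) / (4 * T1 + E * T2 * B) = ((4 * f * T1 + E * T2 * A) / E) / ((4 * T1 + E * T2 * B) / E)"
      using E by (simp add: divide_divide_eq_left)
    also have "\<dots> = (4 * f * T1 * (1 / E) + T2 * A) / (4 * T1 * (1 / E) + T2 * B)"
      using E by (simp add: add_divide_distrib)
    finally show ?thesis unfolding E(2) E_def .
  qed
  have "((\<lambda>\<eta>. (4 * f * T1 * exp (- (2 * (\<eta> + \<eta>0))) + T2 * A) / (4 * T1 * exp (- (2 * (\<eta> + \<eta>0))) + T2 * B))
        \<longlongrightarrow> (4 * f * T1 * 0 + T2 * A) / (4 * T1 * 0 + T2 * B)) at_top"
    using assms by (intro tendsto_intros e) auto
  then show ?thesis unfolding eq using assms by simp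
qed


lemma gen_F_deriv:
  fixes s c d :: "real \<Rightarrow> real"
  assumes ds: "(s has_real_derivative c u * d u) (at u)" and dc: "(c has_real_derivative - s u * d u) (at u)"
    and dd: "(d has_real_derivative - K * s u * c u) (at u)"
    and den: "1 - K * (s u)^2 * B^2 \<noteq> 0"
  shows "((\<lambda>u. (s u * A + B * (c u * d u)) / (1 - K * (s u)^2 * B^2)) has_real_derivative
     ((s u * 0 + c u * d u * A + B * (c u * (- K * s u * c u) + (- s u * d u) * d u)) * (1 - K * (s u)^2 * B^2)
      - (s u * A + B * (c u * d u)) * (0 - K * (of_nat 2 * (c u * d u * s u ^ (2 - Suc 0))) * B^2))
     / ((1 - K * (s u)^2 * B^2) * (1 - K * (s u)^2 * B^2))) (at u)"
proof -
  have d1: "((\<lambda>u. s u * A + B * (c u * d u)) has_real_derivative s u * 0 + c u * d u * A + B * (c u * (- K * s u * c u) + (- s u * d u) * d u)) (at u)"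
    by (intro DERIV_add DERIV_mult' DERIV_cmult ds dc dd DERIV_const)
  have d2: "((\<lambda>u. 1 - K * (s u)^2 * B^2) has_real_derivative 0 - K * (of_nat 2 * (c u * d u * s u ^ (2 - Suc 0))) * B^2) (at u)"
    by (intro DERIV_diff DERIV_const DERIV_cmult DERIV_cmult_right DERIV_power ds)
  show ?thesis by (rule DERIV_divide[OF d1 d2 den])
qed

lemma alpha_facts:
  fixes z1 z2 z3 k \<alpha> \<nu> :: real
  assumes z: "0 < z3" "z3 < z2" "z2 < z1"
    and nu: "\<nu> = sqrt (z1\<^sup>2 - z3\<^sup>2)"
    and kdef: "k = sqrt ((z1\<^sup>2 - z2\<^sup>2) / (z1\<^sup>2 - z3\<^sup>2))"
    and al: "0 < \<alpha>" "\<alpha> < ellK k" "jsn k \<alpha> = sqrt ((z1 - z3) / (z1 + z2))"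
  shows "jsn k (2 * \<alpha>) = \<nu> / z1" "cn k (2 * \<alpha>) * dn k (2 * \<alpha>) = z2 * z3 / z1^2"
proof -
  have n2: "z1\<^sup>2 - z3\<^sup>2 > 0" "z1\<^sup>2 - z2\<^sup>2 > 0" "z2\<^sup>2 - z3\<^sup>2 > 0" using z by (auto intro!: power_strict_mono)
  have nu2: "\<nu>^2 = z1\<^sup>2 - z3\<^sup>2" "\<nu> > 0" using nu n2 by auto
  have nn: "0 \<le> (z1\<^sup>2 - z2\<^sup>2) / (z1\<^sup>2 - z3\<^sup>2)" using n2 by simp
  have kk: "k^2 = (z1\<^sup>2 - z2\<^sup>2) / (z1\<^sup>2 - z3\<^sup>2)" unfolding kdef by (rule real_sqrt_pow2[OF nn])
  have k0: "0 \<le> k" unfolding kdef by (rule real_sqrt_ge_zero[OF nn])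
  have k1: "k < 1"
  proof -
    have "(z1\<^sup>2 - z2\<^sup>2) / (z1\<^sup>2 - z3\<^sup>2) < 1" using n2 by (simp add: divide_less_eq)
    moreover have "0 \<le> (z1\<^sup>2 - z2\<^sup>2) / (z1\<^sup>2 - z3\<^sup>2)" using n2 by simp
    ultimately show ?thesis using kdef by simp
  qed
  have jinj: "jam k x = jam k y \<Longrightarrow> x = y" for x y by (metis ellF_jam[OF k0 k1])
  have j0: "jam k 0 = 0" by (rule jam_0[OF k0 k1])
  have jK: "jam k (ellK k) = pi/2" by (rule jam_K[OF k0 k1])
  have ja1: "0 < jam k \<alpha>"
    using jam_mono_iff[OF k0 k1, of 0 \<alpha>] al(1) j0 jinj[of 0 \<alpha>] by (cases "jam k 0 = jam k \<alpha>") auto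
  have ja2: "jam k \<alpha> < pi/2"
    using jam_mono_iff[OF k0 k1, of \<alpha> "ellK k"] al(2) jK jinj[of \<alpha> "ellK k"] by (cases "jam k \<alpha> = jam k (ellK k)") auto
  define s where "s = jsn k \<alpha>"
  define c where "c = cn k \<alpha>"
  define d where "d = dn k \<alpha>"
  have spos: "s > 0" unfolding s_def jsn_def using ja1 ja2 by (intro sin_gt_zero) auto
  have cpos: "c > 0" unfolding c_def cn_def using ja1 ja2 by (intro cos_gt_zero) auto
  have dpos: "d > 0" unfolding d_def by (rule dn_pos[OF k0 k1])
  have s2: "s^2 = (z1 - z3) / (z1 + z2)" unfolding s_def al(3) using z by simp
  have c2: "c^2 = (z2 + z3) / (z1 + z2)" unfolding c_def cn_sq[OF k0 k1] s_def[symmetric] s2 by (rule L1[OF z])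
  have d2: "d^2 = (z2 + z3) / (z1 + z3)"
  proof -
    have "d^2 = 1 - k^2 * s^2" unfolding d_def dn_sq[OF k0 k1] s_def by simp
    also have "\<dots> = 1 - (z1\<^sup>2 - z2\<^sup>2) / (z1\<^sup>2 - z3\<^sup>2) * ((z1 - z3) / (z1 + z2))" unfolding kk s2 ..
    also have "\<dots> = (z2 + z3) / (z1 + z3)" by (rule L2[OF z])
    finally show ?thesis .
  qed
  define t0 where "t0 = \<nu> * (z2 + z3) / ((z1 + z2) * (z1 + z3))"
  have scd: "s * c * d = t0"
  proof -
    have "(s * c * d)^2 = t0^2"
      unfolding t0_def power_mult_distrib s2 c2 d2 power_divide nu2(1) using L3[OF z] by (simp add: power_mult_distrib)
    moreover have "0 \<le> s * c * d" "0 \<le> t0" using spos cpos dpos nu2 z unfolding t0_def by auto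
    ultimately show ?thesis by (simp add: power2_eq_iff_nonneg)
  qed
  have den: "1 - k^2 * s^4 = 2 * z1 * (z2 + z3) / ((z1 + z3) * (z1 + z2))"
  proof -
    have "s^4 = (s^2)^2" by simp
    then have "1 - k^2 * s^4 = 1 - (z1\<^sup>2 - z2\<^sup>2) / (z1\<^sup>2 - z3\<^sup>2) * ((z1 - z3) / (z1 + z2))^2" unfolding kk s2 by simp
    also have "\<dots> = 2 * z1 * (z2 + z3) / ((z1 + z3) * (z1 + z2))" by (rule L4[OF z])
    finally show ?thesis .
  qed
  have sn2: "jsn k (2 * \<alpha>) = 2 * t0 / (1 - k^2 * s^4)"
  proof -
    have "jsn k (2 * \<alpha>) = jsn k (\<alpha> + \<alpha>)" by simp
    also have "\<dots> = (s * c * d + s * c * d) / (1 - k^2 * s^2 * s^2)"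
      unfolding sn_add[OF k0 k1] s_def c_def d_def by (simp add: mult_ac)
    finally show ?thesis unfolding scd by (simp add: power2_eq_square power4_eq_xxxx mult_ac)
  qed
  show S2: "jsn k (2 * \<alpha>) = \<nu> / z1"
    unfolding sn2 den t0_def by (rule L5[OF z])
  have Fe: "(\<lambda>u. jsn k (u + \<alpha>)) = (\<lambda>u. (jsn k u * (c * d) + s * (cn k u * dn k u)) / (1 - k^2 * (jsn k u)^2 * s^2))"
    unfolding sn_add[OF k0 k1] s_def c_def d_def by (simp add: mult_ac)
  have dl: "((\<lambda>u. jsn k (u + \<alpha>)) has_real_derivative cn k (\<alpha> + \<alpha>) * dn k (\<alpha> + \<alpha>) * 1) (at \<alpha>)"
    by (rule DERIV_chain2[OF sn_deriv[OF k0 k1]]) (intro derivative_eq_intros refl | simp)+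
  have denz: "1 - k^2 * (jsn k \<alpha>)^2 * s^2 \<noteq> 0" using den_pos[OF k0 k1, of \<alpha> \<alpha>] unfolding s_def by simp
  have dr: "((\<lambda>u. (jsn k u * (c * d) + s * (cn k u * dn k u)) / (1 - k^2 * (jsn k u)^2 * s^2)) has_real_derivative
     ((jsn k \<alpha> * 0 + cn k \<alpha> * dn k \<alpha> * (c * d) + s * (cn k \<alpha> * (- (k^2) * jsn k \<alpha> * cn k \<alpha>) + (- jsn k \<alpha> * dn k \<alpha>) * dn k \<alpha>)) * (1 - k^2 * (jsn k \<alpha>)^2 * s^2)
      - (jsn k \<alpha> * (c * d) + s * (cn k \<alpha> * dn k \<alpha>)) * (0 - k^2 * (of_nat 2 * (cn k \<alpha> * dn k \<alpha> * jsn k \<alpha> ^ (2 - Suc 0))) * s^2))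
     / ((1 - k^2 * (jsn k \<alpha>)^2 * s^2) * (1 - k^2 * (jsn k \<alpha>)^2 * s^2))) (at \<alpha>)"
    by (rule gen_F_deriv[OF sn_deriv[OF k0 k1] cn_deriv[OF k0 k1] dn_deriv[OF k0 k1] denz])
  have "cn k (\<alpha> + \<alpha>) * dn k (\<alpha> + \<alpha>) * 1 =
     ((jsn k \<alpha> * 0 + cn k \<alpha> * dn k \<alpha> * (c * d) + s * (cn k \<alpha> * (- (k^2) * jsn k \<alpha> * cn k \<alpha>) + (- jsn k \<alpha> * dn k \<alpha>) * dn k \<alpha>)) * (1 - k^2 * (jsn k \<alpha>)^2 * s^2)
      - (jsn k \<alpha> * (c * d) + s * (cn k \<alpha> * dn k \<alpha>)) * (0 - k^2 * (of_nat 2 * (cn k \<alpha> * dn k \<alpha> * jsn k \<alpha> ^ (2 - Suc 0))) * s^2))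
     / ((1 - k^2 * (jsn k \<alpha>)^2 * s^2) * (1 - k^2 * (jsn k \<alpha>)^2 * s^2))"
    using DERIV_unique[OF dl] dr unfolding Fe by blast
  also have "\<dots> = ((c^2 * d^2 - s^2 * d^2 - k^2 * s^2 * c^2) * (1 - k^2 * s^4) + 4 * k^2 * s^2 * (s * c * d)^2) / (1 - k^2 * s^4)^2"
    unfolding s_def[symmetric] c_def[symmetric] d_def[symmetric]
    by (simp add: power2_eq_square power4_eq_xxxx algebra_simps)
  also have "\<dots> = z2 * z3 / z1^2"
  proof (rule L6[OF z])
    show "(s * c * d)^2 = (z1^2 - z3^2) * (z2 + z3)^2 / ((z1 + z2) * (z1 + z3))^2"
      unfolding scd t0_def power_mult_distrib power_divide nu2(1) by simp
  qed (fact s2 c2 d2 kk den)+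
  finally have fin: "cn k (\<alpha> + \<alpha>) * dn k (\<alpha> + \<alpha>) * 1 = z2 * z3 / z1^2" .
  have aa: "2 * \<alpha> = \<alpha> + \<alpha>" by simp
  show "cn k (2 * \<alpha>) * dn k (2 * \<alpha>) = z2 * z3 / z1^2" unfolding aa using fin by simp
qed


lemma shift_alg:
  fixes z1 P0 X Y K \<nu> :: real
  assumes "z1 \<noteq> 0"
  shows "(X * (P0 / z1^2) + (- (\<nu> / z1)) * Y) / (1 - K * X^2 * (- (\<nu> / z1))^2) = (P0 * X - z1 * (\<nu> * Y)) / (z1^2 - K * \<nu>^2 * X^2)"
proof -
  have "(X * (P0 / z1^2) + (- (\<nu> / z1)) * Y) = (P0 * X - z1 * (\<nu> * Y)) / z1^2"
    using assms by (simp add: field_simps power2_eq_square)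
  moreover have "(1 - K * X^2 * (- (\<nu> / z1))^2) = (z1^2 - K * \<nu>^2 * X^2) / z1^2"
    using assms by (simp add: field_simps power2_eq_square)
  ultimately show ?thesis using assms by simp
qed

lemma jsn_odd: "0 \<le> k \<Longrightarrow> k < 1 \<Longrightarrow> jsn k (-u) = - jsn k u"
  unfolding jsn_def by (simp add: jam_odd)
lemma cn_even: "0 \<le> k \<Longrightarrow> k < 1 \<Longrightarrow> cn k (-u) = cn k u"
  unfolding cn_def by (simp add: jam_odd)
lemma dn_even: "0 \<le> k \<Longrightarrow> k < 1 \<Longrightarrow> dn k (-u) = dn k u"
  unfolding dn_def by (simp add: jsn_odd)

lemma sn_shift:
  fixes z1 z2 z3 k \<alpha> \<nu> w :: real
  assumes z: "0 < z3" "z3 < z2" "z2 < z1"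
    and nu: "\<nu> = sqrt (z1\<^sup>2 - z3\<^sup>2)"
    and kdef: "k = sqrt ((z1\<^sup>2 - z2\<^sup>2) / (z1\<^sup>2 - z3\<^sup>2))"
    and al: "0 < \<alpha>" "\<alpha> < ellK k" "jsn k \<alpha> = sqrt ((z1 - z3) / (z1 + z2))"
    and k0: "0 \<le> k" and k1: "k < 1" and knu: "k^2 * \<nu>^2 = z1^2 - z2^2"
  shows "jsn k (w - 2 * \<alpha>) = (z2 * z3 * jsn k w - z1 * (\<nu> * (cn k w * dn k w))) / (z1^2 - (z1^2 - z2^2) * (jsn k w)^2)"
proof -
  note af = alpha_facts[OF z nu kdef al]
  have "jsn k (w - 2 * \<alpha>) = jsn k (w + - (2 * \<alpha>))" by simp
  also have "\<dots> = (jsn k w * (cn k (2 * \<alpha>) * dn k (2 * \<alpha>)) + (- (\<nu> / z1)) * (cn k w * dn k w)) / (1 - k^2 * (jsn k w)^2 * (- (\<nu> / z1))^2)"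
    unfolding sn_add[OF k0 k1] jsn_odd[OF k0 k1] cn_even[OF k0 k1] dn_even[OF k0 k1] af(1) by (simp add: mult_ac)
  also have "\<dots> = (z2 * z3 * jsn k w - z1 * (\<nu> * (cn k w * dn k w))) / (z1^2 - k^2 * \<nu>^2 * (jsn k w)^2)"
    unfolding af(2) using z by (intro shift_alg) auto
  finally show ?thesis unfolding knu .
qed

lemma ellK_pos: "0 \<le> k \<Longrightarrow> k < 1 \<Longrightarrow> 0 < ellK k"
proof -
  assume k: "0 \<le> k" "k < 1"
  have "pi/2 \<le> ellF k (pi/2)" by (rule ellF_ge[OF k]) simp
  then show ?thesis unfolding ellK_ef using pi_gt_zero by linarith
qed

lemma jacTheta_pos: assumes "0 < k" "k < 1" shows "0 < jacTheta k x"
proof -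
  have k': "0 \<le> sqrt (1 - k^2)" "sqrt (1 - k^2) < 1" using assms by (auto simp: power_le_one)
  have "0 < ellK (sqrt (1 - k^2))" "0 < ellK k" using ellK_pos k' assms by auto
  then have "0 < nome k" "nome k < 1" unfolding nome_def by (auto simp: pi_gt_zero)
  then show ?thesis unfolding jacTheta_def by (rule theta4_pos)
qed


theorem lemma11:
  fixes z1 z2 z3 \<eta>0 b c \<nu> k \<alpha> s0 \<xi> :: real
    and \<phi> :: "real \<Rightarrow> real" and u :: "real \<Rightarrow> real \<Rightarrow> real"
  assumes "0 < z3" "z3 < z2" "z2 < z1"
    and "b = 4 * z1 * z2 * z3"
    and "c = 2 * (z1\<^sup>2 + z2\<^sup>2 + z3\<^sup>2)"
    and "\<nu> = sqrt (z1\<^sup>2 - z3\<^sup>2)"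
    and "k = sqrt ((z1\<^sup>2 - z2\<^sup>2) / (z1\<^sup>2 - z3\<^sup>2))"
    and "0 < \<alpha>" "\<alpha> < ellK k" "jsn k \<alpha> = sqrt ((z1 - z3) / (z1 + z2))"
    and "\<phi> = (\<lambda>x. 2 * (z1 + z3) * (z2 + z3) / ((z1 + z3) - (z1 - z2) * (jsn k (\<nu> * x))\<^sup>2)
                 - z1 - z2 - z3)"
    and "s0 = \<nu> * deriv (jacH k) (2 * \<alpha>) / jacH k (2 * \<alpha>)"
    and "u = (\<lambda>x t. let \<xi> = x + c * t; \<eta> = s0 * \<xi> - b * t in
           (4 * \<phi> \<xi> * (jacTheta k (\<nu> * \<xi> + \<alpha>))\<^sup>2
             + exp (2 * (\<eta> + \<eta>0)) * (jacTheta k (\<nu> * \<xi> - \<alpha>))\<^sup>2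
               * (2 * \<phi> \<xi> * deriv \<phi> \<xi> - deriv (deriv \<phi>) \<xi> - b))
         / (4 * (jacTheta k (\<nu> * \<xi> + \<alpha>))\<^sup>2
             + exp (2 * (\<eta> + \<eta>0)) * (jacTheta k (\<nu> * \<xi> - \<alpha>))\<^sup>2
               * (c + 2 * deriv \<phi> \<xi> - 2 * (\<phi> \<xi>)\<^sup>2)))"
  shows "((\<lambda>\<eta>. u (\<xi> - c * ((s0 * \<xi> - \<eta>) / b)) ((s0 * \<xi> - \<eta>) / b)) \<longlongrightarrow> \<phi> \<xi>) at_bot
       \<and> ((\<lambda>\<eta>. u (\<xi> - c * ((s0 * \<xi> - \<eta>) / b)) ((s0 * \<xi> - \<eta>) / b))
           \<longlongrightarrow> - \<phi> (\<xi> - 2 * \<alpha> / \<nu>)) at_top"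
proof -
  note z = assms(1-3)
  note nu = assms(6) and kdef = assms(7) and al = assms(8-10)
  have n2: "z1\<^sup>2 - z3\<^sup>2 > 0" "z1\<^sup>2 - z2\<^sup>2 > 0" "z2\<^sup>2 - z3\<^sup>2 > 0" using z by (auto intro!: power_strict_mono)
  have nu2: "\<nu>^2 = z1\<^sup>2 - z3\<^sup>2" "\<nu> > 0" using nu n2 by auto
  have nn: "0 \<le> (z1\<^sup>2 - z2\<^sup>2) / (z1\<^sup>2 - z3\<^sup>2)" using n2 by simp
  have kk: "k^2 = (z1\<^sup>2 - z2\<^sup>2) / (z1\<^sup>2 - z3\<^sup>2)" unfolding kdef by (rule real_sqrt_pow2[OF nn])
  have k0: "0 \<le> k" unfolding kdef by (rule real_sqrt_ge_zero[OF nn])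
  have kpos: "0 < k" unfolding kdef using n2 by simp
  have k1: "k < 1"
  proof -
    have "(z1\<^sup>2 - z2\<^sup>2) / (z1\<^sup>2 - z3\<^sup>2) < 1" using n2 by (simp add: divide_less_eq)
    then show ?thesis using kdef nn by simp
  qed
  have knu: "k^2 * \<nu>^2 = z1^2 - z2^2" unfolding kk nu2(1) using n2 by simp
  have bpos: "b > 0" using assms(4) z by simp
  define a where "a = z1 + z3"
  define e where "e = z1 - z2"
  define m where "m = 2 * (z1 + z3) * (z2 + z3)"
  define S where "S = z1 + z2 + z3"
  define Xf where "Xf x = jsn k (\<nu> * x)" for x
  define Wf where "Wf x = \<nu> * (cn k (\<nu> * x) * dn k (\<nu> * x))" for x
  define Vf where "Vf x = - Xf x * (\<nu>^2 + \<nu>^2 * k^2 - 2 * \<nu>^2 * k^2 * (Xf x)^2)" for x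
  have X2le: "(Xf x)^2 \<le> 1" for x unfolding Xf_def jsn_def by (simp add: abs_square_le_1 abs_sin_le_one)
  have Dlow: "z2 + z3 \<le> a - e * (Xf x)^2" for x
  proof -
    have "e * (Xf x)^2 \<le> e * 1" using X2le[of x] z unfolding e_def by (intro mult_left_mono) auto
    then show ?thesis unfolding a_def e_def by simp
  qed
  have Dhi: "a - e * (Xf x)^2 \<le> a" for x using z unfolding e_def by simp
  have Dpos: "0 < a - e * (Xf x)^2" for x using Dlow[of x] z by linarith
  have Dnz: "a - e * (Xf x)^2 \<noteq> 0" for x using Dpos[of x] by simp
  have phi_eq: "\<phi> = (\<lambda>x. m / (a - e * (Xf x)^2) - S)"
    unfolding assms(11) a_def e_def m_def S_def Xf_def by (simp add: algebra_simps)
  define \<phi>1 where "\<phi>1 x = 2 * m * e * Xf x * Wf x / (a - e * (Xf x)^2)^2" for x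
  define \<phi>2 where "\<phi>2 x = 2 * m * e * (((Wf x)^2 + Xf x * Vf x) * (a - e * (Xf x)^2) + 4 * e * (Xf x)^2 * (Wf x)^2) / (a - e * (Xf x)^2)^3" for x
  have dX: "(Xf has_real_derivative Wf x) (at x)" for x
    using Xf_deriv[OF k0 k1, of \<nu> x] unfolding Xf_def[abs_def] Wf_def by simp
  have dW: "(Wf has_real_derivative Vf x) (at x)" for x
    using Wf_deriv[OF k0 k1, of \<nu> x] unfolding Xf_def Wf_def[abs_def] Vf_def by simp
  have dphi: "(\<phi> has_real_derivative \<phi>1 x) (at x)" for x
    unfolding phi_eq \<phi>1_def by (rule gen_phi_deriv[OF dX Dnz])
  have dphi1: "(\<phi>1 has_real_derivative \<phi>2 x) (at x)" for x
    unfolding \<phi>1_def[abs_def] \<phi>2_def by (rule gen_phi1_deriv[OF dX dW Dnz])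
  have deriv1: "deriv \<phi> = \<phi>1" using dphi by (intro ext DERIV_imp_deriv)
  have deriv2': "deriv \<phi>1 \<xi> = \<phi>2 \<xi>" using dphi1 by (rule DERIV_imp_deriv)
  have deriv2: "deriv (deriv \<phi>) \<xi> = \<phi>2 \<xi>" unfolding deriv1 by (rule deriv2')
  define X where "X = Xf \<xi>"
  define W where "W = Wf \<xi>"
  have hW: "W^2 = (1 - X^2) * ((z1^2 - z3^2) - (z1^2 - z2^2) * X^2)"
  proof -
    have "W^2 = \<nu>^2 * ((cn k (\<nu> * \<xi>))^2 * (dn k (\<nu> * \<xi>))^2)" unfolding W_def Wf_def by (simp add: power_mult_distrib)
    also have "\<dots> = (1 - X^2) * (\<nu>^2 - (k^2 * \<nu>^2) * X^2)"
      unfolding cn_sq[OF k0 k1] dn_sq[OF k0 k1] X_def Xf_def by (simp add: algebra_simps)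
    also have "\<dots> = (1 - X^2) * (\<nu>^2 - (z1^2 - z2^2) * X^2)" unfolding knu ..
    finally show ?thesis unfolding nu2(1) .
  qed
  have hV: "Vf \<xi> = - X * ((z1^2 - z3^2) + (z1^2 - z2^2) - 2 * (z1^2 - z2^2) * X^2)"
  proof -
    have "Vf \<xi> = - X * (\<nu>^2 + (k^2 * \<nu>^2) - 2 * (k^2 * \<nu>^2) * X^2)" unfolding Vf_def X_def by (simp add: mult_ac)
    also have "\<dots> = - X * (\<nu>^2 + (z1^2 - z2^2) - 2 * (z1^2 - z2^2) * X^2)" unfolding knu ..
    finally show ?thesis unfolding nu2(1) .
  qed
  define D where "D = a - e * X^2"
  have DnzX: "D \<noteq> 0" unfolding D_def X_def by (rule Dnz)
  have M2nz: "z1^2 - (z1^2 - z2^2) * X^2 \<noteq> 0"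
  proof -
    have "(z1^2 - z2^2) * X^2 \<le> (z1^2 - z2^2) * 1" using X2le[of \<xi>] n2 unfolding X_def by (intro mult_left_mono) auto
    then show ?thesis using z by (smt (verit) zero_less_power2)
  qed
  have shift: "jsn k (\<nu> * \<xi> - 2 * \<alpha>) = (z2 * z3 * X - z1 * W) / (z1^2 - (z1^2 - z2^2) * X^2)"
    unfolding X_def W_def Xf_def Wf_def by (rule sn_shift[OF z nu kdef al k0 k1 knu])
  have psi_eq: "\<phi> (\<xi> - 2 * \<alpha> / \<nu>) = m / (a - e * ((z2 * z3 * X - z1 * W) / (z1^2 - (z1^2 - z2^2) * X^2))^2) - S"
  proof -
    have "\<nu> * (\<xi> - 2 * \<alpha> / \<nu>) = \<nu> * \<xi> - 2 * \<alpha>" using nu2 by (simp add: field_simps)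
    then show ?thesis unfolding phi_eq Xf_def shift[symmetric] by simp
  qed
  have hN: "a - e * ((z2 * z3 * X - z1 * W) / (z1^2 - (z1^2 - z2^2) * X^2))^2 \<noteq> 0"
  proof -
    have "\<nu> * (\<xi> - 2 * \<alpha> / \<nu>) = \<nu> * \<xi> - 2 * \<alpha>" using nu2 by (simp add: field_simps)
    then have eq: "a - e * ((z2 * z3 * X - z1 * W) / (z1^2 - (z1^2 - z2^2) * X^2))^2 = a - e * (Xf (\<xi> - 2 * \<alpha> / \<nu>))^2"
      unfolding Xf_def shift[symmetric] by simp
    show ?thesis unfolding eq by (rule Dnz)
  qed
  define \<phi>0 where "\<phi>0 = m / D - S"
  define A where "A = 2 * \<phi>0 * \<phi>1 \<xi> - \<phi>2 \<xi> - b"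
  define B where "B = c + 2 * \<phi>1 \<xi> - 2 * \<phi>0^2"
  have phi0: "\<phi> \<xi> = \<phi>0" unfolding phi_eq \<phi>0_def D_def X_def by simp
  have hD': "(z1 + z3) - (z1 - z2) * X^2 \<noteq> 0" using DnzX unfolding D_def a_def e_def .
  have hN': "(z1 + z3) - (z1 - z2) * ((z2 * z3 * X - z1 * W) / (z1^2 - (z1^2 - z2^2) * X^2))^2 \<noteq> 0"
    using hN unfolding a_def e_def .
  have ma: "2 * (2 * (z1 + z3) * (z2 + z3) / ((z1 + z3) - (z1 - z2) * X^2) - (z1 + z2 + z3))
      * (2 * (2 * (z1 + z3) * (z2 + z3)) * (z1 - z2) * X * W / ((z1 + z3) - (z1 - z2) * X^2)^2)
      - 2 * (2 * (z1 + z3) * (z2 + z3)) * (z1 - z2) * ((W^2 + X * (- X * ((z1^2 - z3^2) + (z1^2 - z2^2) - 2 * (z1^2 - z2^2) * X^2))) * ((z1 + z3) - (z1 - z2) * X^2) + 4 * (z1 - z2) * X^2 * W^2) / ((z1 + z3) - (z1 - z2) * X^2)^3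
      - 4 * z1 * z2 * z3
      + (2 * (z1 + z3) * (z2 + z3) / ((z1 + z3) - (z1 - z2) * ((z2 * z3 * X - z1 * W) / (z1^2 - (z1^2 - z2^2) * X^2))^2) - (z1 + z2 + z3))
      * (2 * (z1^2 + z2^2 + z3^2) + 2 * (2 * (2 * (z1 + z3) * (z2 + z3)) * (z1 - z2) * X * W / ((z1 + z3) - (z1 - z2) * X^2)^2)
         - 2 * (2 * (z1 + z3) * (z2 + z3) / ((z1 + z3) - (z1 - z2) * X^2) - (z1 + z2 + z3))^2) = 0"
    by (rule main_alg[where p=z1 and q=z2 and r=z3 and X=X and W=W, OF hW hD' M2nz hN'])
  have key: "A + \<phi> (\<xi> - 2 * \<alpha> / \<nu>) * B = 0"
  proof -
    have e1: "\<phi>1 \<xi> = 2 * m * e * X * W / D^2" unfolding \<phi>1_def X_def W_def D_def ..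
    have e2: "\<phi>2 \<xi> = 2 * m * e * ((W^2 + X * Vf \<xi>) * D + 4 * e * X^2 * W^2) / D^3" unfolding \<phi>2_def X_def W_def D_def ..
    show ?thesis using ma unfolding A_def B_def e1 e2 hV psi_eq \<phi>0_def D_def a_def e_def m_def S_def assms(4) assms(5)
      by (simp only: mult.assoc)
  qed
  have Bpos: "B > 0"
  proof -
    have Dr: "z2 + z3 \<le> D" "D \<le> a" unfolding D_def X_def using Dlow Dhi by auto
    have Dp: "0 < D" using Dr z by linarith
    have mpos: "0 < m" unfolding m_def using z by simp
    have "m / a \<le> m / D" using Dr Dp mpos by (intro divide_left_mono) auto
    moreover have "m / D \<le> m / (z2 + z3)" using Dr Dp mpos z by (intro divide_left_mono) auto
    moreover have "m / a = 2 * (z2 + z3)"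
    proof -
      have "z1 + z3 \<noteq> 0" using z by simp
      then show ?thesis unfolding m_def a_def by (simp add: field_simps)
    qed
    moreover have "m / (z2 + z3) = 2 * (z1 + z3)" unfolding m_def using z by simp
    ultimately have r1: "z2 + z3 - z1 \<le> \<phi>0" "\<phi>0 \<le> z1 + z3 - z2" unfolding \<phi>0_def S_def by auto
    have hQ: "(\<phi>1 \<xi>)^2 = \<phi>0^4 - 2 * (z1^2 + z2^2 + z3^2) * \<phi>0^2 + 2 * (4 * z1 * z2 * z3) * \<phi>0
                   + (z2 + z3 - z1) * (z1 - z2 + z3) * (z1 + z2 - z3) * (- (z1 + z2 + z3))"
      using phi_Q[where p=z1 and q=z2 and r=z3 and X=X and W=W, OF hW hD']
      unfolding \<phi>1_def \<phi>0_def X_def[symmetric] W_def[symmetric] D_def a_def e_def m_def S_def by simp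
    show ?thesis unfolding B_def assms(5) by (rule quartic_B[OF z r1 hQ])
  qed
  define T1 where "T1 = (jacTheta k (\<nu> * \<xi> + \<alpha>))\<^sup>2"
  define T2 where "T2 = (jacTheta k (\<nu> * \<xi> - \<alpha>))\<^sup>2"
  have T1: "T1 > 0" unfolding T1_def using jacTheta_pos[OF kpos k1, of "\<nu> * \<xi> + \<alpha>"] by simp
  have T2: "T2 > 0" unfolding T2_def using jacTheta_pos[OF kpos k1, of "\<nu> * \<xi> - \<alpha>"] by simp
  have feq: "u (\<xi> - c * ((s0 * \<xi> - \<eta>) / b)) ((s0 * \<xi> - \<eta>) / b)
     = (4 * \<phi>0 * T1 + exp (2 * (\<eta> + \<eta>0)) * T2 * A) / (4 * T1 + exp (2 * (\<eta> + \<eta>0)) * T2 * B)" for \<eta>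
  proof -
    have x1: "\<xi> - c * ((s0 * \<xi> - \<eta>) / b) + c * ((s0 * \<xi> - \<eta>) / b) = \<xi>" by simp
    have x2: "s0 * \<xi> - b * ((s0 * \<xi> - \<eta>) / b) = \<eta>" using bpos by simp
    show ?thesis unfolding assms(13) Let_def x1 x2 deriv1 deriv2' phi0 A_def B_def T1_def T2_def
      by (simp add: mult_ac)
  qed
  have lb: "((\<lambda>\<eta>. u (\<xi> - c * ((s0 * \<xi> - \<eta>) / b)) ((s0 * \<xi> - \<eta>) / b)) \<longlongrightarrow> \<phi> \<xi>) at_bot"
    unfolding feq phi0 by (rule lim_bot[OF T1])
  have lt: "((\<lambda>\<eta>. u (\<xi> - c * ((s0 * \<xi> - \<eta>) / b)) ((s0 * \<xi> - \<eta>) / b)) \<longlongrightarrow> - \<phi> (\<xi> - 2 * \<alpha> / \<nu>)) at_top"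
  proof -
    have "A / B = - \<phi> (\<xi> - 2 * \<alpha> / \<nu>)" using key Bpos by (simp add: field_simps)
    moreover have "((\<lambda>\<eta>. (4 * \<phi>0 * T1 + exp (2 * (\<eta> + \<eta>0)) * T2 * A) / (4 * T1 + exp (2 * (\<eta> + \<eta>0)) * T2 * B)) \<longlongrightarrow> A / B) at_top"
      using Bpos by (intro lim_top[OF T2]) simp
    ultimately show ?thesis unfolding feq by simp
  qed
  show ?thesis using lb lt by simp
qed


end
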